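(* Let $(\mathbb{H}_n)_{n\geq 2}$ be a family of $3$-uniform hypergraphs $\mathbb{H}_n=\langle V_n,E_n\rangle$ without isolated vertices such that each $\mathbb{H}_n$ is not $2$-colourable and has girth greater than $3\binom{3n}{2}$. Let $\mathcal{V}$ be an ai-semiring variety that contains $S_c(abc)$. For each $n\geq 2$ let $\mathbf{w}_n$ be a non-hyperedge term for $\mathbb{H}_n$. If $\mathcal{V}$ satisfies the identity $$\mathbf{t}_{\mathbb{H}_n}\approx \mathbf{t}_{\mathbb{H}_n}+\mathbf{w}_n$$ for every $n\geq 2$, then $\mathcal{V}$ is nonfinitely based (has no finite basis for its identities).
   Context: An ai-semiring (additively idempotent semiring) is an algebra $(S,+,\cdot)$ with $(S,+)$ a commutative idempotent semigroup, $(S,\cdot)$ a semigroup, and $(x+y)z\approx xz+yz$, $x(y+z)\approx xy+xz$. Ai-semiring terms over a countable variable set $X$ are finite sums of nonempty words in $X^+$; an identity $\mathbf{u}\approx\mathbf{v}$ is a pair of terms. A variety is finitely based if it can be defined by finitely many identities. A flat semiring is an ai-semiring whose multiplicative reduct has a zero element $\infty$ and in which $x+y=\infty$ for all distinct $x,y$. $S_c(abc)$ is the flat semiring whose elements are $\infty$ together with the nonempty subwords of $abc$ in the free commutative semigroup on $\{a,b,c\}$ (i.e. $a,b,c,ab,ac,bc,abc$); the product of two such words $\mathbf u,\mathbf v$ is $\mathbf u\mathbf v$ if $\mathbf u\mathbf v$ is again such a subword, and $\infty$ otherwise; $\infty$ is a multiplicative zero; addition is $x+x=x$, $x+y=\infty$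 for $x\neq y$. A $3$-uniform hypergraph $\mathbb{H}=\langle V,E\rangle$ has a vertex set $V$ and a family $E$ of $3$-element subsets of $V$ (hyperedges). It is $2$-colourable if there is $\varphi:V\to\{0,1\}$ with $|\varphi(e)|=2$ for every $e\in E$. A cycle is a sequence $v_1,e_1,v_2,e_2,\dots,v_n,e_n$ of vertices and hyperedges without repetitions, with $v_1\in e_1\cap e_n$ and $v_{i+1}\in e_i\cap e_{i+1}$ for $1\le i<n$; its length is $n$, and the girth is the length of a shortest cycle. For a $3$-uniform hypergraph $\mathbb{H}=\langle V,E\rangle$ without isolated vertices and of girth at least $5$, the hypergraph semiring $S_{\mathbb{H}}$ is the flat semiring with pairwise distinct elements $\infty$, $\mathbf a$, $\mathbf a_v$ ($v\in V$), $\mathbf c_v$ ($v\in V$), with flat addition, $\infty$ a multiplicative zero, and commutative multiplication given by: $\mathbf a_u\mathbf a_v=\mathbf c_w$ if $\{u,v,w\}\in E$; $\mathbf a_v\mathbf c_v=\mathbf c_v\mathbf a_v=\mathbf a$; all other products equal $\infty$. (Equivalently, it is the flat semiring generated by $\{\mathbf a_v\}$ and $\infty$ subject to: commutativity; $\mathbf a_u\mathbf a_v=\infty$ unless $\{u,v\}$ lies in a hyperedge; $\mathbf a_{u_1}\mathbf a_{u_2}\mathbf a_{u_3}=\mathbf a_{v_1}\mathbf a_{v_2}\mathbf a_{v_3}=:\mathbf a$ for hyperedges $\{u_i\},\{v_i\}$; $\mathbf a_{u_1}\mathbf a_{u_2}=\mathbf a_{v_1}\mathbf a_{v_2}$ whenever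 $\{u_1,u_2,w\},\{v_1,v_2,w\}\in E$.) For such $\mathbb H$ take variables $\{x_v\mid v\in V\}$. A hyperedge product is a word $x_{v_1}x_{v_2}x_{v_3}$ with $\{v_1,v_2,v_3\}\in E$ (any order). $\mathbf{t}_{\mathbb H}$ denotes the sum of all hyperedge products. A non-hyperedge term for $\mathbb H$ is any ai-semiring term $\mathbf w$ in the variables $\{x_v\}$ whose value in $S_{\mathbb H}$ under the assignment $x_v\mapsto \mathbf a_v$ is not $\mathbf a$. *)

theory Defs
  imports Main
begin

text \<open>An ai-semiring term is a finite nonempty
sum of words; since + is associative, commutative and idempotent, a term is represented
by the finite nonempty set of its words (this is the free ai-semiring on X).\<close>

type_synonym aiterm = "nat list set"

definition is_term :: "aiterm \<Rightarrow> bool" where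
  "is_term t \<longleftrightarrow> finite t \<and> t \<noteq> {} \<and> (\<forall>w\<in>t. w \<noteq> [])"

definition tsum :: "aiterm \<Rightarrow> aiterm \<Rightarrow> aiterm" where
  "tsum s t = s \<union> t"

definition tprod :: "aiterm \<Rightarrow> aiterm \<Rightarrow> aiterm" where
  "tprod s t = {u @ v | u v. u \<in> s \<and> v \<in> t}"

fun wsubst :: "(nat \<Rightarrow> aiterm) \<Rightarrow> nat list \<Rightarrow> aiterm" where
  "wsubst \<sigma> [] = {[]}"
| "wsubst \<sigma> [x] = \<sigma> x"
| "wsubst \<sigma> (x # y # ys) = tprod (\<sigma> x) (wsubst \<sigma> (y # ys))"

definition tsubst :: "(nat \<Rightarrow> aiterm) \<Rightarrow> aiterm \<Rightarrow> aiterm" where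
  "tsubst \<sigma> t = (\<Union>w\<in>t. wsubst \<sigma> w)"

text \<open>Equational deduction (Birkhoff) from a set of identities; the ai-semiring axioms
are built into the representation of terms.\<close>

inductive derivable :: "(aiterm \<times> aiterm) set \<Rightarrow> aiterm \<Rightarrow> aiterm \<Rightarrow> bool"
  for \<Sigma> where
  refl: "is_term u \<Longrightarrow> derivable \<Sigma> u u"
| sym: "derivable \<Sigma> u v \<Longrightarrow> derivable \<Sigma> v u"
| trans: "derivable \<Sigma> u v \<Longrightarrow> derivable \<Sigma> v w \<Longrightarrow> derivable \<Sigma> u w"
| ax: "(u, v) \<in> \<Sigma> \<Longrightarrow> (\<forall>x. is_term (\<sigma> x)) \<Longrightarrow> derivable \<Sigma> (tsubst \<sigma> u) (tsubst \<sigma> v)"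
| plus: "derivable \<Sigma> u v \<Longrightarrow> is_term t \<Longrightarrow> derivable \<Sigma> (tsum u t) (tsum v t)"
| mult_l: "derivable \<Sigma> u v \<Longrightarrow> is_term t \<Longrightarrow> derivable \<Sigma> (tprod t u) (tprod t v)"
| mult_r: "derivable \<Sigma> u v \<Longrightarrow> is_term t \<Longrightarrow> derivable \<Sigma> (tprod u t) (tprod v t)"

definition identity_set :: "(aiterm \<times> aiterm) set \<Rightarrow> bool" where
  "identity_set \<Sigma> \<longleftrightarrow> (\<forall>(u, v)\<in>\<Sigma>. is_term u \<and> is_term v)"

definition finitely_based :: "(aiterm \<times> aiterm) set \<Rightarrow> bool" where
  "finitely_based \<Sigma> \<longleftrightarrow> (\<exists>\<Sigma>'. finite \<Sigma>' \<and> identity_set \<Sigma>' \<and>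
      (\<forall>(u, v)\<in>\<Sigma>'. derivable \<Sigma> u v) \<and> (\<forall>(u, v)\<in>\<Sigma>. derivable \<Sigma>' u v))"

fun wval :: "('a \<Rightarrow> 'a \<Rightarrow> 'a) \<Rightarrow> (nat \<Rightarrow> 'a) \<Rightarrow> nat list \<Rightarrow> 'a" where
  "wval mul \<phi> [] = undefined"
| "wval mul \<phi> [x] = \<phi> x"
| "wval mul \<phi> (x # y # ys) = mul (\<phi> x) (wval mul \<phi> (y # ys))"

definition tval :: "'a \<Rightarrow> ('a \<Rightarrow> 'a \<Rightarrow> 'a) \<Rightarrow> (nat \<Rightarrow> 'a) \<Rightarrow> aiterm \<Rightarrow> 'a" where
  "tval zr mul \<phi> t = (if \<exists>x. wval mul \<phi> ` t = {x} then the_elem (wval mul \<phi> ` t) else zr)"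

text \<open>Elements: None is \<infinity>; Some s with s a nonempty subset of {0,1,2} stands for the
subword of abc (in the free commutative semigroup) with letters s (0=a,1=b,2=c).\<close>

definition Sc_carrier :: "nat set option set" where
  "Sc_carrier = {None} \<union> Some ` {s. s \<noteq> {} \<and> s \<subseteq> {0, 1, 2}}"

fun Sc_mul :: "nat set option \<Rightarrow> nat set option \<Rightarrow> nat set option" where
  "Sc_mul (Some s) (Some t) = (if s \<inter> t = {} then Some (s \<union> t) else None)"
| "Sc_mul _ _ = None"

definition Sc_satisfies :: "aiterm \<Rightarrow> aiterm \<Rightarrow> bool" where
  "Sc_satisfies u v \<longleftrightarrow> (\<forall>\<phi>. (\<forall>x. \<phi> x \<in> Sc_carrier) \<longrightarrow>
      tval None Sc_mul \<phi> u = tval None Sc_mul \<phi> v)"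

definition three_uniform :: "nat set \<Rightarrow> nat set set \<Rightarrow> bool" where
  "three_uniform V E \<longleftrightarrow> finite V \<and> (\<forall>e\<in>E. e \<subseteq> V \<and> card e = 3)"

definition no_isolated :: "nat set \<Rightarrow> nat set set \<Rightarrow> bool" where
  "no_isolated V E \<longleftrightarrow> (\<forall>v\<in>V. \<exists>e\<in>E. v \<in> e)"

definition two_colourable :: "nat set \<Rightarrow> nat set set \<Rightarrow> bool" where
  "two_colourable V E \<longleftrightarrow> (\<exists>\<phi> :: nat \<Rightarrow> bool. \<forall>e\<in>E. card (\<phi> ` e) = 2)"

definition has_cycle_of_length :: "nat set set \<Rightarrow> nat \<Rightarrow> bool" where
  "has_cycle_of_length E k \<longleftrightarrow> (\<exists>vs es. k \<ge> 2 \<and> length vs = k \<and> length es = k \<and>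
      distinct vs \<and> distinct es \<and> set es \<subseteq> E \<and>
      (\<forall>i<k. vs ! i \<in> es ! i \<and> vs ! (Suc i mod k) \<in> es ! i))"

definition girth_greater :: "nat set set \<Rightarrow> nat \<Rightarrow> bool" where
  "girth_greater E N \<longleftrightarrow> (\<forall>k. has_cycle_of_length E k \<longrightarrow> k > N)"

datatype hs = Inf | HA | HAv nat | HCv nat

fun hmul :: "nat set set \<Rightarrow> hs \<Rightarrow> hs \<Rightarrow> hs" where
  "hmul E (HAv u) (HAv v) =
     (if \<exists>w. {u, v, w} \<in> E then HCv (THE w. {u, v, w} \<in> E) else Inf)"
| "hmul E (HAv u) (HCv v) = (if u = v then HA else Inf)"
| "hmul E (HCv u) (HAv v) = (if u = v then HA else Inf)"
| "hmul E _ _ = Inf"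

definition hval :: "nat set set \<Rightarrow> aiterm \<Rightarrow> hs" where
  "hval E t = tval Inf (hmul E) HAv t"

definition t_H :: "nat set set \<Rightarrow> aiterm" where
  "t_H E = {[a, b, c] | a b c. {a, b, c} \<in> E}"

definition non_hyperedge_term :: "nat set \<Rightarrow> nat set set \<Rightarrow> aiterm \<Rightarrow> bool" where
  "non_hyperedge_term V E w \<longleftrightarrow> is_term w \<and> (\<forall>u\<in>w. set u \<subseteq> V) \<and> hval E w \<noteq> HA"

end

theory Submission
  imports Defs
begin


lemma tprod_finite: "finite s \<Longrightarrow> finite t \<Longrightarrow> finite (tprod s t)"
proof -
  assume "finite s" "finite t"
  have "tprod s t = (\<lambda>(u,v). u @ v) ` (s \<times> t)" unfolding tprod_def by auto
  thus ?thesis using \<open>finite s\<close> \<open>finite t\<close> by simp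
qed

lemma is_term_tprod: "is_term s \<Longrightarrow> is_term t \<Longrightarrow> is_term (tprod s t)"
proof -
  assume s: "is_term s" and t: "is_term t"
  have f: "finite (tprod s t)" using s t tprod_finite unfolding is_term_def by blast
  obtain a b where "a \<in> s" "b \<in> t" using s t unfolding is_term_def by blast
  then have ne: "a @ b \<in> tprod s t" unfolding tprod_def by blast
  have "\<forall>w\<in>tprod s t. w \<noteq> []" using s t unfolding tprod_def is_term_def by force
  then show ?thesis using f ne unfolding is_term_def by blast
qed

lemma is_term_tsum: "is_term s \<Longrightarrow> is_term t \<Longrightarrow> is_term (tsum s t)"
  unfolding is_term_def tsum_def by auto

lemma is_term_wsubst: "(\<forall>x. is_term (\<sigma> x)) \<Longrightarrow> p \<noteq> [] \<Longrightarrow> is_term (wsubst \<sigma> p)"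
  by (induction \<sigma> p rule: wsubst.induct) (auto intro: is_term_tprod)

lemma is_term_tsubst: "(\<forall>x. is_term (\<sigma> x)) \<Longrightarrow> is_term u \<Longrightarrow> is_term (tsubst \<sigma> u)"
proof -
  assume sig: "\<forall>x. is_term (\<sigma> x)" and u: "is_term u"
  have W: "\<And>p. p \<in> u \<Longrightarrow> is_term (wsubst \<sigma> p)" using is_term_wsubst[OF sig] u unfolding is_term_def by blast
  have f: "finite (tsubst \<sigma> u)" unfolding tsubst_def using u W unfolding is_term_def by blast
  obtain p where p: "p \<in> u" using u unfolding is_term_def by blast
  have ne: "tsubst \<sigma> u \<noteq> {}" using W[OF p] p unfolding tsubst_def is_term_def by blast
  have "\<forall>w\<in>tsubst \<sigma> u. w \<noteq> []" using W unfolding tsubst_def is_term_def by blast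
  then show ?thesis using f ne unfolding is_term_def by blast
qed

definition fholds :: "'a \<Rightarrow> ('a \<Rightarrow> 'a \<Rightarrow> 'a) \<Rightarrow> 'a set \<Rightarrow> aiterm \<Rightarrow> aiterm \<Rightarrow> bool" where
  "fholds zr mul C u v \<longleftrightarrow> (\<forall>\<phi>. (\<forall>x. \<phi> x \<in> C) \<longrightarrow> tval zr mul \<phi> u = tval zr mul \<phi> v)"

locale flatm =
  fixes zr :: 'a and mul :: "'a \<Rightarrow> 'a \<Rightarrow> 'a" and C :: "'a set"
  assumes zr_in: "zr \<in> C"
    and closed: "a \<in> C \<Longrightarrow> b \<in> C \<Longrightarrow> mul a b \<in> C"
    and assoc: "a \<in> C \<Longrightarrow> b \<in> C \<Longrightarrow> c \<in> C \<Longrightarrow> mul (mul a b) c = mul a (mul b c)"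
    and zl: "mul zr a = zr" and zrr: "mul a zr = zr"
    and cancr: "a \<in> C \<Longrightarrow> a' \<in> C \<Longrightarrow> b \<in> C \<Longrightarrow> mul a b = mul a' b \<Longrightarrow> mul a b \<noteq> zr \<Longrightarrow> a = a'"
    and cancl: "a \<in> C \<Longrightarrow> a' \<in> C \<Longrightarrow> b \<in> C \<Longrightarrow> mul b a = mul b a' \<Longrightarrow> mul b a \<noteq> zr \<Longrightarrow> a = a'"
begin

lemma wval_in: "(\<forall>x. \<phi> x \<in> C) \<Longrightarrow> p \<noteq> [] \<Longrightarrow> wval mul \<phi> p \<in> C"
  by (induction p rule: induct_list012) (auto intro: closed)

lemma tval_in: "(\<forall>x. \<phi> x \<in> C) \<Longrightarrow> is_term t \<Longrightarrow> tval zr mul \<phi> t \<in> C"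
proof -
  assume a: "\<forall>x. \<phi> x \<in> C" "is_term t"
  show ?thesis
  proof (cases "\<exists>x. wval mul \<phi> ` t = {x}")
    case True
    then obtain x where x: "wval mul \<phi> ` t = {x}" by blast
    then obtain p where "p \<in> t" "x = wval mul \<phi> p" by auto
    moreover have "p \<noteq> []" using a(2) \<open>p \<in> t\<close> unfolding is_term_def by auto
    ultimately show ?thesis using x wval_in[OF a(1)] unfolding tval_def by auto
  qed (auto simp: tval_def zr_in)
qed

lemma wval_append: "(\<forall>x. \<phi> x \<in> C) \<Longrightarrow> p \<noteq> [] \<Longrightarrow> q \<noteq> [] \<Longrightarrow>
   wval mul \<phi> (p @ q) = mul (wval mul \<phi> p) (wval mul \<phi> q)"
proof (induction p)
  case Nil thus ?case by simp
next
  case (Cons a p)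
  show ?case
  proof (cases p)
    case Nil
    then show ?thesis using Cons by (cases q) auto
  next
    case (Cons b p')
    then have "wval mul \<phi> ((a # p) @ q) = mul (\<phi> a) (wval mul \<phi> (p @ q))" by simp
    also have "\<dots> = mul (\<phi> a) (mul (wval mul \<phi> p) (wval mul \<phi> q))"
      using Cons.IH Cons.prems Cons by simp
    also have "\<dots> = mul (mul (\<phi> a) (wval mul \<phi> p)) (wval mul \<phi> q)"
      using assoc wval_in Cons.prems Cons by simp
    finally show ?thesis using Cons by simp
  qed
qed

lemma tval_single: "wval mul \<phi> ` t = {c} \<Longrightarrow> tval zr mul \<phi> t = c"
  unfolding tval_def by auto

lemma tval_nonsingle: "\<not> (\<exists>c. wval mul \<phi> ` t = {c}) \<Longrightarrow> tval zr mul \<phi> t = zr"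
  unfolding tval_def by auto

lemma tval_cases: "t \<noteq> {} \<Longrightarrow> tval zr mul \<phi> t \<noteq> zr \<Longrightarrow> wval mul \<phi> ` t = {tval zr mul \<phi> t}"
  unfolding tval_def by (auto split: if_splits)

lemma tval_Union:
  assumes I: "I \<noteq> {}" and W: "\<And>i. i \<in> I \<Longrightarrow> W i \<noteq> {}"
  shows "tval zr mul \<phi> (\<Union>i\<in>I. W i) =
     (if \<exists>c. (\<lambda>i. tval zr mul \<phi> (W i)) ` I = {c} then the_elem ((\<lambda>i. tval zr mul \<phi> (W i)) ` I) else zr)"
proof (cases "\<exists>c. c \<noteq> zr \<and> (\<forall>i\<in>I. tval zr mul \<phi> (W i) = c)")
  case True
  then obtain c where c: "c \<noteq> zr" "\<forall>i\<in>I. tval zr mul \<phi> (W i) = c" by blast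
  then have "\<forall>i\<in>I. wval mul \<phi> ` W i = {c}" using tval_cases W by metis
  then have "wval mul \<phi> ` (\<Union>i\<in>I. W i) = {c}" using I by (simp add: image_UN)
  then have "tval zr mul \<phi> (\<Union>i\<in>I. W i) = c" by (rule tval_single)
  moreover have "(\<lambda>i. tval zr mul \<phi> (W i)) ` I = {c}" using c I by auto
  ultimately show ?thesis by simp
next
  case False
  have L: "tval zr mul \<phi> (\<Union>i\<in>I. W i) = zr"
  proof (rule ccontr)
    assume ne: "tval zr mul \<phi> (\<Union>i\<in>I. W i) \<noteq> zr"
    let ?c = "tval zr mul \<phi> (\<Union>i\<in>I. W i)"
    have un: "(\<Union>i\<in>I. W i) \<noteq> {}" using I W by auto
    have img: "wval mul \<phi> ` (\<Union>i\<in>I. W i) = {?c}" using tval_cases[OF un ne] .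
    have "\<forall>i\<in>I. wval mul \<phi> ` W i = {?c}"
    proof
      fix i assume i: "i \<in> I"
      have "W i \<subseteq> (\<Union>i\<in>I. W i)" using i by (rule UN_upper)
      then have "wval mul \<phi> ` W i \<subseteq> {?c}" using img image_mono by metis
      moreover have "wval mul \<phi> ` W i \<noteq> {}" using W[OF i] by simp
      ultimately show "wval mul \<phi> ` W i = {?c}" using subset_singletonD by metis
    qed
    then have "\<forall>i\<in>I. tval zr mul \<phi> (W i) = ?c" by (simp add: tval_single)
    thus False using False ne by blast
  qed
  have R: "(if \<exists>c. (\<lambda>i. tval zr mul \<phi> (W i)) ` I = {c} then the_elem ((\<lambda>i. tval zr mul \<phi> (W i)) ` I) else zr) = zr"
  proof (cases "\<exists>c. (\<lambda>i. tval zr mul \<phi> (W i)) ` I = {c}")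
    case True
    then obtain c where c: "(\<lambda>i. tval zr mul \<phi> (W i)) ` I = {c}" by blast
    then have "\<forall>i\<in>I. tval zr mul \<phi> (W i) = c" by auto
    then have "c = zr" using False by blast
    thus ?thesis using c by simp
  qed simp
  show ?thesis using L R by simp
qed

lemma tval_union:
  assumes "s \<noteq> {}" "t \<noteq> {}"
  shows "tval zr mul \<phi> (s \<union> t) = (if tval zr mul \<phi> s = tval zr mul \<phi> t then tval zr mul \<phi> s else zr)"
proof -
  have "s \<union> t = (\<Union>i\<in>{True, False}. if i then s else t)" by auto
  then have "tval zr mul \<phi> (s \<union> t) = tval zr mul \<phi> (\<Union>i\<in>{True, False}. if i then s else t)" by simp
  also have "\<dots> = (if \<exists>c. (\<lambda>i. tval zr mul \<phi> (if i then s else t)) ` {True, False} = {c}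
       then the_elem ((\<lambda>i. tval zr mul \<phi> (if i then s else t)) ` {True, False}) else zr)"
    by (rule tval_Union) (use assms in auto)
  also have "\<dots> = (if tval zr mul \<phi> s = tval zr mul \<phi> t then tval zr mul \<phi> s else zr)"
    by (auto simp: doubleton_eq_iff)
  finally show ?thesis .
qed

lemma nonsingle: "A \<noteq> {} \<Longrightarrow> \<not> (\<exists>b. A = {b}) \<Longrightarrow> \<exists>b b'. b \<in> A \<and> b' \<in> A \<and> b \<noteq> b'"
  by blast

lemma tval_tprod:
  assumes phi: "\<forall>x. \<phi> x \<in> C" and s: "is_term s" and t: "is_term t"
  shows "tval zr mul \<phi> (tprod s t) = mul (tval zr mul \<phi> s) (tval zr mul \<phi> t)"
proof -
  have img: "wval mul \<phi> ` tprod s t = {mul a b | a b. a \<in> wval mul \<phi> ` s \<and> b \<in> wval mul \<phi> ` t}"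
  proof (intro equalityI subsetI)
    fix z assume "z \<in> wval mul \<phi> ` tprod s t"
    then obtain p q where pq: "p \<in> s" "q \<in> t" "z = wval mul \<phi> (p @ q)" unfolding tprod_def by blast
    have "p \<noteq> []" "q \<noteq> []" using pq s t unfolding is_term_def by auto
    then have "z = mul (wval mul \<phi> p) (wval mul \<phi> q)" using pq wval_append phi by simp
    then show "z \<in> {mul a b | a b. a \<in> wval mul \<phi> ` s \<and> b \<in> wval mul \<phi> ` t}" using pq by blast
  next
    fix z assume "z \<in> {mul a b | a b. a \<in> wval mul \<phi> ` s \<and> b \<in> wval mul \<phi> ` t}"
    then obtain p q where pq: "p \<in> s" "q \<in> t" "z = mul (wval mul \<phi> p) (wval mul \<phi> q)" by blast
    have "p \<noteq> []" "q \<noteq> []" using pq s t unfolding is_term_def by auto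
    then have "z = wval mul \<phi> (p @ q)" using pq wval_append phi by simp
    moreover have "p @ q \<in> tprod s t" using pq unfolding tprod_def by blast
    ultimately show "z \<in> wval mul \<phi> ` tprod s t" by blast
  qed
  have sin: "wval mul \<phi> ` s \<subseteq> C" using s phi wval_in unfolding is_term_def by auto
  have tin: "wval mul \<phi> ` t \<subseteq> C" using t phi wval_in unfolding is_term_def by auto
  have sne: "s \<noteq> {}" and tne: "t \<noteq> {}" using s t unfolding is_term_def by auto
  show ?thesis
  proof (cases "\<exists>a. wval mul \<phi> ` s = {a}")
    case sT: True
    then obtain a where a: "wval mul \<phi> ` s = {a}" by blast
    show ?thesis
    proof (cases "\<exists>b. wval mul \<phi> ` t = {b}")
      case True
      then obtain b where b: "wval mul \<phi> ` t = {b}" by blast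
      have "wval mul \<phi> ` tprod s t = {mul a b}" unfolding img a b by blast
      then show ?thesis using tval_single[OF a] tval_single[OF b] tval_single by metis
    next
      case False
      then obtain b b' where bb: "b \<in> wval mul \<phi> ` t" "b' \<in> wval mul \<phi> ` t" "b \<noteq> b'"
        using tne nonsingle[of "wval mul \<phi> ` t"] by auto
      have "tval zr mul \<phi> (tprod s t) = zr"
      proof (rule ccontr)
        assume ne: "tval zr mul \<phi> (tprod s t) \<noteq> zr"
        have "tprod s t \<noteq> {}" using is_term_tprod[OF s t] unfolding is_term_def by blast
        then have i1: "wval mul \<phi> ` tprod s t = {tval zr mul \<phi> (tprod s t)}" using tval_cases ne by blast
        have "mul a b \<in> wval mul \<phi> ` tprod s t" "mul a b' \<in> wval mul \<phi> ` tprod s t"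
          unfolding img using a bb by blast+
        then have "mul a b = mul a b'" "mul a b \<noteq> zr" using i1 ne by auto
        moreover have "a \<in> C" "b \<in> C" "b' \<in> C" using sin tin a bb by auto
        ultimately have "b = b'" using cancl by blast
        thus False using bb by simp
      qed
      thus ?thesis using tval_nonsingle[OF False] zrr by simp
    qed
  next
    case False
    then obtain a a' where aa: "a \<in> wval mul \<phi> ` s" "a' \<in> wval mul \<phi> ` s" "a \<noteq> a'"
      using sne nonsingle[of "wval mul \<phi> ` s"] by auto
    obtain b where b: "b \<in> wval mul \<phi> ` t" using tne by auto
    have "tval zr mul \<phi> (tprod s t) = zr"
    proof (rule ccontr)
      assume ne: "tval zr mul \<phi> (tprod s t) \<noteq> zr"
      have "tprod s t \<noteq> {}" using is_term_tprod[OF s t] unfolding is_term_def by blast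
      then have i1: "wval mul \<phi> ` tprod s t = {tval zr mul \<phi> (tprod s t)}" using tval_cases ne by blast
      have "mul a b \<in> wval mul \<phi> ` tprod s t" "mul a' b \<in> wval mul \<phi> ` tprod s t"
        unfolding img using aa b by blast+
      then have "mul a b = mul a' b" "mul a b \<noteq> zr" using i1 ne by auto
      moreover have "a \<in> C" "a' \<in> C" "b \<in> C" using sin tin aa b by auto
      ultimately have "a = a'" using cancr by blast
      thus False using aa by simp
    qed
    thus ?thesis using tval_nonsingle[OF False] zl by simp
  qed
qed

lemma tval_wsubst:
  assumes phi: "\<forall>x. \<phi> x \<in> C" and sig: "\<forall>x. is_term (\<sigma> x)"
  shows "p \<noteq> [] \<Longrightarrow> tval zr mul \<phi> (wsubst \<sigma> p) = wval mul (\<lambda>x. tval zr mul \<phi> (\<sigma> x)) p"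
proof (induction p rule: induct_list012)
  case (3 x y zs)
  have t1: "is_term (wsubst \<sigma> (y # zs))" using is_term_wsubst sig by blast
  have "tval zr mul \<phi> (wsubst \<sigma> (x # y # zs)) = tval zr mul \<phi> (tprod (\<sigma> x) (wsubst \<sigma> (y # zs)))" by simp
  also have "\<dots> = mul (tval zr mul \<phi> (\<sigma> x)) (tval zr mul \<phi> (wsubst \<sigma> (y # zs)))"
    using tval_tprod[OF phi] sig t1 by blast
  also have "\<dots> = mul (tval zr mul \<phi> (\<sigma> x)) (wval mul (\<lambda>x. tval zr mul \<phi> (\<sigma> x)) (y # zs))"
    using 3(2) by simp
  finally show ?case by simp
qed auto

lemma tval_tsubst:
  assumes phi: "\<forall>x. \<phi> x \<in> C" and sig: "\<forall>x. is_term (\<sigma> x)" and u: "is_term u"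
  shows "tval zr mul \<phi> (tsubst \<sigma> u) = tval zr mul (\<lambda>x. tval zr mul \<phi> (\<sigma> x)) u"
proof -
  let ?\<psi> = "\<lambda>x. tval zr mul \<phi> (\<sigma> x)"
  have une: "u \<noteq> {}" and nw: "\<forall>p\<in>u. p \<noteq> []" using u unfolding is_term_def by auto
  have W: "\<And>p. p \<in> u \<Longrightarrow> wsubst \<sigma> p \<noteq> {}" using is_term_wsubst[OF sig] nw unfolding is_term_def by blast
  have "tval zr mul \<phi> (tsubst \<sigma> u) = (if \<exists>c. (\<lambda>p. tval zr mul \<phi> (wsubst \<sigma> p)) ` u = {c}
      then the_elem ((\<lambda>p. tval zr mul \<phi> (wsubst \<sigma> p)) ` u) else zr)"
    unfolding tsubst_def by (rule tval_Union[OF une W])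
  also have "(\<lambda>p. tval zr mul \<phi> (wsubst \<sigma> p)) ` u = wval mul ?\<psi> ` u"
    by (rule image_cong) (simp_all add: tval_wsubst[OF phi sig] nw)
  finally show ?thesis unfolding tval_def by simp
qed

theorem sound:
  assumes Sig: "identity_set \<Sigma>" and hold: "\<forall>(u,v)\<in>\<Sigma>. fholds zr mul C u v"
  shows "derivable \<Sigma> u v \<Longrightarrow> is_term u \<and> is_term v \<and> fholds zr mul C u v"
proof (induction rule: derivable.induct)
  case (refl u) thus ?case by (simp add: fholds_def)
next
  case (sym u v) thus ?case by (simp add: fholds_def)
next
  case (trans u v w) thus ?case by (simp add: fholds_def)
next
  case (ax u v \<sigma>)
  have tu: "is_term u" "is_term v" using Sig ax(1) unfolding identity_set_def by auto
  have huv: "fholds zr mul C u v" using hold ax(1) by auto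
  have "fholds zr mul C (tsubst \<sigma> u) (tsubst \<sigma> v)"
    unfolding fholds_def
  proof (intro allI impI)
    fix \<phi> :: "nat \<Rightarrow> 'a" assume phi: "\<forall>x. \<phi> x \<in> C"
    have psi: "\<forall>x. tval zr mul \<phi> (\<sigma> x) \<in> C" using tval_in[OF phi] ax(2) by blast
    have "tval zr mul \<phi> (tsubst \<sigma> u) = tval zr mul (\<lambda>x. tval zr mul \<phi> (\<sigma> x)) u"
      by (rule tval_tsubst[OF phi ax(2) tu(1)])
    also have "\<dots> = tval zr mul (\<lambda>x. tval zr mul \<phi> (\<sigma> x)) v"
      using huv[unfolded fholds_def, rule_format, OF psi[rule_format]] .
    also have "\<dots> = tval zr mul \<phi> (tsubst \<sigma> v)"
      by (rule tval_tsubst[OF phi ax(2) tu(2), symmetric])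
    finally show "tval zr mul \<phi> (tsubst \<sigma> u) = tval zr mul \<phi> (tsubst \<sigma> v)" .
  qed
  then show ?case using is_term_tsubst ax(2) tu by blast
next
  case (plus u v t)
  have ne: "u \<noteq> {}" "v \<noteq> {}" "t \<noteq> {}" using plus unfolding is_term_def by auto
  have "fholds zr mul C (tsum u t) (tsum v t)"
    unfolding fholds_def tsum_def
  proof (intro allI impI)
    fix \<phi> :: "nat \<Rightarrow> 'a" assume phi: "\<forall>x. \<phi> x \<in> C"
    have "tval zr mul \<phi> u = tval zr mul \<phi> v" using plus.IH phi unfolding fholds_def by blast
    then show "tval zr mul \<phi> (u \<union> t) = tval zr mul \<phi> (v \<union> t)"
      by (simp add: tval_union[OF ne(1,3)] tval_union[OF ne(2,3)])
  qed
  then show ?case using plus is_term_tsum by blast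
next
  case (mult_l u v t)
  have "fholds zr mul C (tprod t u) (tprod t v)"
    unfolding fholds_def
  proof (intro allI impI)
    fix \<phi> :: "nat \<Rightarrow> 'a" assume phi: "\<forall>x. \<phi> x \<in> C"
    have "tval zr mul \<phi> u = tval zr mul \<phi> v" using mult_l.IH phi unfolding fholds_def by blast
    then show "tval zr mul \<phi> (tprod t u) = tval zr mul \<phi> (tprod t v)"
      using tval_tprod[OF phi] mult_l by simp
  qed
  then show ?case using mult_l is_term_tprod by blast
next
  case (mult_r u v t)
  have "fholds zr mul C (tprod u t) (tprod v t)"
    unfolding fholds_def
  proof (intro allI impI)
    fix \<phi> :: "nat \<Rightarrow> 'a" assume phi: "\<forall>x. \<phi> x \<in> C"
    have "tval zr mul \<phi> u = tval zr mul \<phi> v" using mult_r.IH phi unfolding fholds_def by blast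
    then show "tval zr mul \<phi> (tprod u t) = tval zr mul \<phi> (tprod v t)"
      using tval_tprod[OF phi] mult_r by simp
  qed
  then show ?case using mult_r is_term_tprod by blast
qed

end


lemma Sc_mul_None2[simp]: "Sc_mul a None = None"
  by (cases a) auto

lemma Sc_assoc: "Sc_mul (Sc_mul a b) c = Sc_mul a (Sc_mul b c)"
proof (cases a)
  case (Some x) note a = this
  show ?thesis
  proof (cases b)
    case (Some y) note b = this
    show ?thesis
    proof (cases c)
      case (Some z)
      show ?thesis
      proof (cases "x \<inter> y = {} \<and> (x \<union> y) \<inter> z = {}")
        case True
        then have "y \<inter> z = {}" "x \<inter> (y \<union> z) = {}" "x \<inter> y = {}" "(x \<union> y) \<inter> z = {}" by blast+
        then show ?thesis by (simp add: a b Some Un_assoc)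
      next
        case False
        then have "\<not> (y \<inter> z = {} \<and> x \<inter> (y \<union> z) = {})" by blast
        then show ?thesis using False by (auto simp: a b Some)
      qed
    qed (simp add: a b)
  qed (simp add: a)
qed simp

lemma Sc_mul_Some: "Sc_mul a b = Some z \<longleftrightarrow> (\<exists>x y. a = Some x \<and> b = Some y \<and> x \<inter> y = {} \<and> z = x \<union> y)"
  by (cases a; cases b) auto

lemma Sc_canc: assumes "Sc_mul a b = Sc_mul a' b" "Sc_mul a b \<noteq> None" shows "a = a'"
proof -
  obtain z where z: "Sc_mul a b = Some z" using assms(2) by blast
  then obtain x y where a: "a = Some x" and b: "b = Some y" and d: "x \<inter> y = {}" and zz: "z = x \<union> y"
    unfolding Sc_mul_Some by blast
  from z assms(1) have "Sc_mul a' b = Some z" by simp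
  then obtain x' y' where a': "a' = Some x'" and b': "b = Some y'" and d': "x' \<inter> y' = {}" and zz': "z = x' \<union> y'"
    unfolding Sc_mul_Some by blast
  have "y' = y" using b b' by simp
  then have "x = x'" using d d' zz zz' by blast
  then show ?thesis using a a' by simp
qed

lemma Sc_comm: "Sc_mul a b = Sc_mul b a"
  by (cases a; cases b) (auto simp: Int_commute Un_commute)

lemma Sc_flat: "flatm None Sc_mul Sc_carrier"
proof
  show "None \<in> Sc_carrier" unfolding Sc_carrier_def by simp
next
  fix a b assume ab: "a \<in> Sc_carrier" "b \<in> Sc_carrier"
  show "Sc_mul a b \<in> Sc_carrier"
  proof (cases "Sc_mul a b")
    case None then show ?thesis unfolding Sc_carrier_def by simp
  next
    case (Some z)
    then obtain x y where "a = Some x" "b = Some y" "x \<inter> y = {}" "z = x \<union> y"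
      unfolding Sc_mul_Some by blast
    moreover have "x \<noteq> {}" "x \<subseteq> {0,1,2}" "y \<subseteq> {0,1,2}" using ab \<open>a = Some x\<close> \<open>b = Some y\<close> unfolding Sc_carrier_def by auto
    ultimately have "z \<noteq> {}" "z \<subseteq> {0,1,2}" by auto
    then show ?thesis using Some unfolding Sc_carrier_def by blast
  qed
next
  fix a b c :: "nat set option"
  show "Sc_mul (Sc_mul a b) c = Sc_mul a (Sc_mul b c)" by (rule Sc_assoc)
next
  fix a :: "nat set option" show "Sc_mul None a = None" by simp
next
  fix a :: "nat set option" show "Sc_mul a None = None" by simp
next
  fix a a' b :: "nat set option"
  assume "Sc_mul a b = Sc_mul a' b" "Sc_mul a b \<noteq> None"
  then show "a = a'" by (rule Sc_canc)
next
  fix a a' b :: "nat set option"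
  assume "Sc_mul b a = Sc_mul b a'" "Sc_mul b a \<noteq> None"
  then have "Sc_mul a b = Sc_mul a' b" "Sc_mul a b \<noteq> None" by (simp_all add: Sc_comm)
  then show "a = a'" by (rule Sc_canc)
qed

definition lin :: "nat set set \<Rightarrow> bool" where
  "lin E \<longleftrightarrow> (\<forall>e\<in>E. card e = 3) \<and>
     (\<forall>e1\<in>E. \<forall>e2\<in>E. \<forall>a b. a \<noteq> b \<longrightarrow> a \<in> e1 \<longrightarrow> b \<in> e1 \<longrightarrow> a \<in> e2 \<longrightarrow> b \<in> e2 \<longrightarrow> e1 = e2)"

lemma card2_le: "card {b, c} \<le> 2"
  by (cases "b = c") simp_all

lemma edge_distinct:
  assumes "lin E" "{a, b, c} \<in> E"
  shows "a \<noteq> b" "a \<noteq> c" "b \<noteq> c"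
proof -
  have c3: "card {a, b, c} = 3" using assms unfolding lin_def by blast
  show "a \<noteq> b"
  proof
    assume "a = b" then have "{a, b, c} = {b, c}" by blast
    then show False using c3 card2_le[of b c] by simp
  qed
  show "a \<noteq> c"
  proof
    assume "a = c" then have "{a, b, c} = {b, c}" by blast
    then show False using c3 card2_le[of b c] by simp
  qed
  show "b \<noteq> c"
  proof
    assume "b = c" then have "{a, b, c} = {a, c}" by blast
    then show False using c3 card2_le[of a c] by simp
  qed
qed

lemma lin_eq: "lin E \<Longrightarrow> e1 \<in> E \<Longrightarrow> e2 \<in> E \<Longrightarrow> a \<noteq> b \<Longrightarrow> a \<in> e1 \<Longrightarrow> b \<in> e1 \<Longrightarrow> a \<in> e2 \<Longrightarrow> b \<in> e2 \<Longrightarrow> e1 = e2"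
  unfolding lin_def by blast

lemma edge_third:
  assumes L: "lin E" and e1: "{u, v, w} \<in> E" and e2: "{u', v, w} \<in> E"
  shows "u = u'"
proof -
  have d: "u \<noteq> v" "u \<noteq> w" "v \<noteq> w" using edge_distinct[OF L e1] by auto
  have "{u, v, w} = {u', v, w}" by (rule lin_eq[OF L e1 e2 d(3)]) simp_all
  then have "u \<in> {u', v, w}" by (metis insertI1)
  then show ?thesis using d by blast
qed

lemma the_third:
  assumes L: "lin E" and e: "{s, t, w} \<in> E"
  shows "(THE w'. {s, t, w'} \<in> E) = w"
proof (rule the_equality)
  show "{s, t, w} \<in> E" by (rule e)
next
  fix w' assume a: "{s, t, w'} \<in> E"
  have x: "{s, t, w'} = {w', s, t}" "{s, t, w} = {w, s, t}" by blast+
  have "{w', s, t} \<in> E" "{w, s, t} \<in> E" using a e unfolding x .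
  then show "w' = w" using edge_third[OF L] by blast
qed

lemma hmul_AA_edge: "lin E \<Longrightarrow> {s, t, w} \<in> E \<Longrightarrow> hmul E (HAv s) (HAv t) = HCv w"
  using the_third by auto

lemma hmul_AA_none: "\<not> (\<exists>w. {s, t, w} \<in> E) \<Longrightarrow> hmul E (HAv s) (HAv t) = Inf"
  by auto

lemma hmul_AA_C: "lin E \<Longrightarrow> hmul E (HAv s) (HAv t) = HCv w \<Longrightarrow> {s, t, w} \<in> E"
  by (cases "\<exists>w. {s, t, w} \<in> E") (auto simp: the_third)

lemma hmul_AAA: "lin E \<Longrightarrow> hmul E (hmul E (HAv u) (HAv v)) (HAv w) = (if {u, v, w} \<in> E then HA else Inf)"
proof (cases "\<exists>w'. {u, v, w'} \<in> E")
  case True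
  assume L: "lin E"
  then obtain w' where w': "{u, v, w'} \<in> E" using True by blast
  have "hmul E (HAv u) (HAv v) = HCv w'" using hmul_AA_edge[OF L w'] .
  moreover have "{u, v, w} \<in> E \<longleftrightarrow> w = w'"
  proof
    assume "{u, v, w} \<in> E"
    moreover have x: "{u, v, w} = {w, u, v}" "{u, v, w'} = {w', u, v}" by blast+
    ultimately have "{w, u, v} \<in> E" "{w', u, v} \<in> E" using w' by simp_all
    then show "w = w'" using edge_third[OF L] by blast
  qed (use w' in simp)
  ultimately show ?thesis by simp
next
  case False
  then have "{u, v, w} \<notin> E" by blast
  moreover have "hmul E (HAv u) (HAv v) = Inf" using False by simp
  ultimately show ?thesis by simp
qed

lemma hmul_comm_AA: "hmul E (HAv u) (HAv v) = hmul E (HAv v) (HAv u)"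
proof -
  have e: "\<And>w. {u, v, w} = {v, u, w}" by blast
  show ?thesis by (simp only: hmul.simps e)
qed
lemma hmul_comm: "hmul E a b = hmul E b a"
proof (cases a)
  case (HAv u) note a = this
  show ?thesis
  proof (cases b)
    case (HAv v) then show ?thesis using a hmul_comm_AA by metis
  qed (simp_all add: a)
next
  case (HCv u) note a = this
  show ?thesis by (cases b) (simp_all add: a)
qed (cases b; simp)+

lemma hmul_AAA': "lin E \<Longrightarrow> hmul E (HAv u) (hmul E (HAv v) (HAv w)) = (if {u, v, w} \<in> E then HA else Inf)"
proof -
  assume L: "lin E"
  have "hmul E (HAv u) (hmul E (HAv v) (HAv w)) = hmul E (hmul E (HAv v) (HAv w)) (HAv u)"
    by (rule hmul_comm)
  also have "\<dots> = (if {v, w, u} \<in> E then HA else Inf)" using hmul_AAA[OF L] .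
  also have "{v, w, u} = {u, v, w}" by blast
  finally show ?thesis .
qed

lemma hmul_assoc: assumes L: "lin E" shows "hmul E (hmul E a b) c = hmul E a (hmul E b c)"
proof (cases a)
  case (HAv u) note a = this
  show ?thesis
  proof (cases b)
    case (HAv v) note b = this
    show ?thesis
    proof (cases c)
      case (HAv w)
      then show ?thesis using hmul_AAA[OF L] hmul_AAA'[OF L] a b by simp
    qed (simp_all add: a b split: if_split)
  qed (cases c; simp add: a split: if_split)+
next
  case (HCv u) note a = this
  show ?thesis by (cases b; cases c) (simp_all add: a split: if_split)
qed (cases b; cases c; simp split: if_split)+

lemma hmul_nonInf:
  assumes "hmul E a b \<noteq> Inf"
  shows "(\<exists>u v. a = HAv u \<and> b = HAv v \<and> (\<exists>w. {u, v, w} \<in> E)) \<or> (\<exists>u. a = HAv u \<and> b = HCv u \<and> hmul E a b = HA)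
     \<or> (\<exists>u. a = HCv u \<and> b = HAv u \<and> hmul E a b = HA)"
proof (cases a)
  case (HAv u) note a = this
  show ?thesis
  proof (cases b)
    case (HAv v)
    then show ?thesis using assms a by (cases "\<exists>w. {u, v, w} \<in> E") simp_all
  next
    case (HCv v)
    then show ?thesis using assms a by (cases "u = v") simp_all
  qed (use assms a in simp_all)
next
  case (HCv u) note a = this
  show ?thesis
  proof (cases b)
    case (HAv v)
    then show ?thesis using assms a by (cases "u = v") simp_all
  qed (use assms a in simp_all)
qed (use assms in simp_all)

lemma hmul_canc:
  assumes L: "lin E" and eq: "hmul E a b = hmul E a' b" and ne: "hmul E a b \<noteq> Inf"
  shows "a = a'"
proof -
  have ne': "hmul E a' b \<noteq> Inf" using eq ne by simp
  consider (c1) u v w where "a = HAv u" "b = HAv v" "{u, v, w} \<in> E"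
    | (c2) u where "a = HAv u" "b = HCv u" "hmul E a b = HA"
    | (c3) u where "a = HCv u" "b = HAv u" "hmul E a b = HA"
    using hmul_nonInf[OF ne] by blast
  then show ?thesis
  proof cases
    case c1
    have hw: "hmul E a b = HCv w" using hmul_AA_edge[OF L c1(3)] c1 by simp
    consider (d1) u' v' w' where "a' = HAv u'" "b = HAv v'" "{u', v', w'} \<in> E"
      | (d2) u' where "a' = HAv u'" "b = HCv u'" "hmul E a' b = HA"
      | (d3) u' where "a' = HCv u'" "b = HAv u'" "hmul E a' b = HA"
      using hmul_nonInf[OF ne'] by blast
    then show ?thesis
    proof cases
      case d1
      then have "hmul E (HAv u') (HAv v) = HCv w" using eq hw c1 by simp
      then have "{u', v, w} \<in> E" by (rule hmul_AA_C[OF L])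
      then show ?thesis using edge_third[OF L c1(3)] c1 d1 by simp
    next
      case d2 then show ?thesis using c1 by simp
    next
      case d3 then show ?thesis using eq hw by simp
    qed
  next
    case c2
    consider (d1) u' v' w' where "a' = HAv u'" "b = HAv v'" "{u', v', w'} \<in> E"
      | (d2) u' where "a' = HAv u'" "b = HCv u'" "hmul E a' b = HA"
      | (d3) u' where "a' = HCv u'" "b = HAv u'" "hmul E a' b = HA"
      using hmul_nonInf[OF ne'] by blast
    then show ?thesis
    proof cases
      case d1 then show ?thesis using c2 by simp
    next
      case d2 then show ?thesis using c2 by simp
    next
      case d3 then show ?thesis using c2 by simp
    qed
  next
    case c3
    consider (d1) u' v' w' where "a' = HAv u'" "b = HAv v'" "{u', v', w'} \<in> E"
      | (d2) u' where "a' = HAv u'" "b = HCv u'" "hmul E a' b = HA"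
      | (d3) u' where "a' = HCv u'" "b = HAv u'" "hmul E a' b = HA"
      using hmul_nonInf[OF ne'] by blast
    then show ?thesis
    proof cases
      case d1
      then have "hmul E a' b = HCv w'" using hmul_AA_edge[OF L d1(3)] by simp
      then show ?thesis using eq c3 by simp
    next
      case d2 then show ?thesis using c3 by simp
    next
      case d3 then show ?thesis using c3 by simp
    qed
  qed
qed

lemma H_flat: assumes L: "lin E" shows "flatm Inf (hmul E) UNIV"
proof
  fix a :: hs show "hmul E Inf a = Inf" by simp
next
  fix a :: hs show "hmul E a Inf = Inf" by (cases a) simp_all
next
  fix a b c :: hs show "hmul E (hmul E a b) c = hmul E a (hmul E b c)" by (rule hmul_assoc[OF L])
next
  fix a a' b :: hs assume "hmul E a b = hmul E a' b" "hmul E a b \<noteq> Inf"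
  then show "a = a'" by (rule hmul_canc[OF L])
next
  fix a a' b :: hs assume as: "hmul E b a = hmul E b a'" "hmul E b a \<noteq> Inf"
  have "hmul E a b = hmul E b a" by (rule hmul_comm)
  also have "\<dots> = hmul E b a'" by (rule as(1))
  also have "\<dots> = hmul E a' b" by (rule hmul_comm)
  finally have e: "hmul E a b = hmul E a' b" .
  have "hmul E a b \<noteq> Inf" by (subst hmul_comm) (rule as(2))
  then show "a = a'" using e hmul_canc[OF L] by blast
next
  show "Inf \<in> UNIV" by simp
next
  fix a b :: hs show "hmul E a b \<in> UNIV" by simp
qed


definition adj :: "nat set set \<Rightarrow> (nat \<times> nat) set" where
  "adj F = {(a, b). \<exists>f\<in>F. a \<in> f \<and> b \<in> f}"

definition conn :: "nat set set \<Rightarrow> nat \<Rightarrow> nat \<Rightarrow> bool" where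
  "conn F a b \<longleftrightarrow> (a, b) \<in> (adj F)\<^sup>*"

lemma conn_refl: "conn F a a" unfolding conn_def by simp

lemma conn_trans: "conn F a b \<Longrightarrow> conn F b c \<Longrightarrow> conn F a c"
  unfolding conn_def by (rule rtrancl_trans)

lemma conn_sym: "conn F a b \<Longrightarrow> conn F b a"
proof -
  have "sym (adj F)" unfolding adj_def sym_def by blast
  then have "sym ((adj F)\<^sup>*)" by (rule sym_rtrancl)
  then show "conn F a b \<Longrightarrow> conn F b a" unfolding conn_def by (meson symD)
qed

lemma conn_edge: "f \<in> F \<Longrightarrow> a \<in> f \<Longrightarrow> b \<in> f \<Longrightarrow> conn F a b"
  unfolding conn_def adj_def by (rule r_into_rtrancl) blast

lemma conn_iff: "conn F a b \<Longrightarrow> conn F t a \<longleftrightarrow> conn F t b"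
  using conn_trans conn_sym by blast

fun bpath :: "nat set set \<Rightarrow> nat list \<Rightarrow> nat set list \<Rightarrow> bool" where
  "bpath F [] es = False"
| "bpath F [v] es = (es = [])"
| "bpath F (v # v' # vs) es = (case es of [] \<Rightarrow> False | e # es' \<Rightarrow> e \<in> F \<and> v \<in> e \<and> v' \<in> e \<and> bpath F (v' # vs) es')"

lemma bpath_len: "bpath F vs es \<Longrightarrow> length vs = Suc (length es)"
  by (induction F vs es rule: bpath.induct) (auto split: list.splits)

lemma bpath_nth: "bpath F vs es \<Longrightarrow> i < length es \<Longrightarrow> es ! i \<in> F \<and> vs ! i \<in> es ! i \<and> vs ! Suc i \<in> es ! i"
proof (induction F vs es arbitrary: i rule: bpath.induct)
  case (3 F v v' vs es)
  then obtain e es' where es: "es = e # es'" by (cases es) auto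
  show ?case
  proof (cases i)
    case 0 then show ?thesis using 3 es by simp
  next
    case (Suc j)
    then have "j < length es'" using 3 es by simp
    then show ?thesis using 3 es Suc by simp
  qed
qed auto

lemma bpath_drop: "bpath F vs es \<Longrightarrow> j < length vs \<Longrightarrow> bpath F (drop j vs) (drop j es)"
proof (induction F vs es arbitrary: j rule: bpath.induct)
  case (3 F v v' vs es)
  then obtain e es' where es: "es = e # es'" by (cases es) auto
  show ?case
  proof (cases j)
    case 0 then show ?thesis using 3 by simp
  next
    case (Suc k)
    then have "bpath F (drop k (v' # vs)) (drop k es')" using 3 es by simp
    then show ?thesis using Suc es by simp
  qed
qed auto

lemma bpath_set: "bpath F vs es \<Longrightarrow> set es \<subseteq> F"
  using bpath_nth by (metis in_set_conv_nth subsetI)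

lemma nth_notin_drop: "distinct xs \<Longrightarrow> j < length xs \<Longrightarrow> xs ! j \<notin> set (drop (Suc j) xs)"
proof -
  assume d: "distinct xs" and j: "j < length xs"
  have "xs = take (Suc j) xs @ drop (Suc j) xs" by simp
  then have "set (take (Suc j) xs) \<inter> set (drop (Suc j) xs) = {}" using d by (metis distinct_append)
  moreover have "xs ! j \<in> set (take (Suc j) xs)" using j by (simp add: in_set_conv_nth) (metis lessI nth_take)
  ultimately show ?thesis by blast
qed

lemma path_exists:
  assumes "conn F a b"
  shows "\<exists>vs es. bpath F vs es \<and> hd vs = a \<and> last vs = b \<and> distinct vs \<and> distinct es"
  using assms unfolding conn_def
proof (induction rule: converse_rtrancl_induct)
  case base
  show ?case by (rule exI[of _ "[b]"], rule exI[of _ "[]"]) simp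
next
  case (step a a')
  obtain vs es where p: "bpath F vs es" "hd vs = a'" "last vs = b" "distinct vs" "distinct es"
    using step.IH by blast
  obtain f where f: "f \<in> F" "a \<in> f" "a' \<in> f" using step.hyps(1) unfolding adj_def by blast
  have len: "length vs = Suc (length es)" using bpath_len[OF p(1)] .
  show ?case
  proof (cases "a \<in> set vs")
    case True
    then obtain j where j: "j < length vs" "vs ! j = a" by (metis in_set_conv_nth)
    have "bpath F (drop j vs) (drop j es)" using bpath_drop[OF p(1) j(1)] .
    moreover have "hd (drop j vs) = a" using j by (simp add: hd_drop_conv_nth)
    moreover have "last (drop j vs) = b" using j p(3) by simp
    moreover have "distinct (drop j vs)" "distinct (drop j es)" using p by simp_all
    ultimately show ?thesis by blast
  next
    case nv: False
    show ?thesis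
    proof (cases "f \<in> set es")
      case True
      then obtain j where j: "j < length es" "es ! j = f" by (metis in_set_conv_nth)
      have sj: "Suc j < length vs" using j len by simp
      have dr: "drop (Suc j) vs = vs ! Suc j # drop (Suc (Suc j)) vs" using sj by (simp add: Cons_nth_drop_Suc)
      have bp: "bpath F (drop (Suc j) vs) (drop (Suc j) es)" using bpath_drop[OF p(1) sj] .
      have vin: "vs ! Suc j \<in> f" using bpath_nth[OF p(1) j(1)] j by simp
      have bp': "bpath F (vs ! Suc j # drop (Suc (Suc j)) vs) (drop (Suc j) es)" using bp dr by simp
      have "bpath F (a # vs ! Suc j # drop (Suc (Suc j)) vs) (f # drop (Suc j) es)"
        using bp' f vin by simp
      then have "bpath F (a # drop (Suc j) vs) (f # drop (Suc j) es)" using dr by simp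
      moreover have "hd (a # drop (Suc j) vs) = a" by simp
      moreover have "last (a # drop (Suc j) vs) = b" using sj p(3) dr by (metis last_ConsR last_drop list.simps(3))
      moreover have "distinct (a # drop (Suc j) vs)" using nv p(4) set_drop_subset[of "Suc j" vs] by auto
      moreover have "distinct (f # drop (Suc j) es)" using p(5) nth_notin_drop[OF p(5) j(1)] j by simp
      ultimately show ?thesis by blast
    next
      case False
      obtain vs' where vs: "vs = a' # vs'" using p(2) len by (cases vs) auto
      have "bpath F (a # vs) (f # es)" using p(1) f vs by simp
      moreover have "hd (a # vs) = a" by simp
      moreover have "last (a # vs) = b" using p(3) vs by simp
      moreover have "distinct (a # vs)" using nv p(4) by simp
      moreover have "distinct (f # es)" using False p(5) by simp
      ultimately show ?thesis by blast
    qed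
  qed
qed

lemma path_cycle:
  assumes p: "bpath F vs es" and dv: "distinct vs" and de: "distinct es" and e: "e \<notin> F"
    and h: "hd vs \<in> e" and l: "last vs \<in> e" and ne: "hd vs \<noteq> last vs"
  shows "has_cycle_of_length (insert e F) (length vs)"
proof -
  let ?k = "length vs"
  have len: "?k = Suc (length es)" using bpath_len[OF p] .
  have k2: "?k \<ge> 2"
  proof (rule ccontr)
    assume "\<not> ?k \<ge> 2"
    then have "?k = 1" using len by linarith
    then obtain v where "vs = [v]" by (metis One_nat_def length_0_conv length_Suc_conv)
    then show False using ne by simp
  qed
  have se: "set es \<subseteq> F" using bpath_set[OF p] .
  have d2: "distinct (es @ [e])" using de se e by auto
  have s2: "set (es @ [e]) \<subseteq> insert e F" using se by auto
  have cyc: "\<forall>i<?k. vs ! i \<in> (es @ [e]) ! i \<and> vs ! (Suc i mod ?k) \<in> (es @ [e]) ! i"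
  proof (intro allI impI)
    fix i assume i: "i < ?k"
    show "vs ! i \<in> (es @ [e]) ! i \<and> vs ! (Suc i mod ?k) \<in> (es @ [e]) ! i"
    proof (cases "i < length es")
      case True
      have "(es @ [e]) ! i = es ! i" using True by (simp add: nth_append)
      moreover have "Suc i mod ?k = Suc i" using True len by simp
      ultimately show ?thesis using bpath_nth[OF p True] by simp
    next
      case False
      then have ii: "i = length es" using i len by simp
      have "(es @ [e]) ! i = e" using ii by simp
      moreover have "Suc i mod ?k = 0" using ii len by simp
      moreover have "vs ! i = last vs"
      proof -
        have "vs \<noteq> []" using len by auto
        then show ?thesis using ii len by (simp add: last_conv_nth)
      qed
      moreover have "vs ! 0 = hd vs" using len by (cases vs) simp_all
      ultimately show ?thesis using h l by simp
    qed
  qed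
  show ?thesis unfolding has_cycle_of_length_def
    using k2 len d2 s2 cyc dv by (intro exI[of _ vs] exI[of _ "es @ [e]"]) simp
qed

definition noCyc :: "nat set set \<Rightarrow> bool" where
  "noCyc F \<longleftrightarrow> (\<forall>k. \<not> has_cycle_of_length F k)"

lemma cycle_mono: "has_cycle_of_length F k \<Longrightarrow> F \<subseteq> G \<Longrightarrow> has_cycle_of_length G k"
  unfolding has_cycle_of_length_def by blast

lemma noCyc_mono: "noCyc G \<Longrightarrow> F \<subseteq> G \<Longrightarrow> noCyc F"
  unfolding noCyc_def using cycle_mono by blast

lemma no_conn:
  assumes nc: "noCyc (insert e F)" and e: "e \<notin> F" and ab: "a \<in> e" "b \<in> e" "a \<noteq> b"
  shows "\<not> conn F a b"
proof
  assume "conn F a b"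
  then obtain vs es where p: "bpath F vs es" "hd vs = a" "last vs = b" "distinct vs" "distinct es"
    using path_exists by blast
  have "has_cycle_of_length (insert e F) (length vs)"
    using path_cycle[OF p(1) p(4) p(5) e] p(2,3) ab by simp
  then show False using nc unfolding noCyc_def by blast
qed


definition rainbow :: "nat set set \<Rightarrow> (nat \<Rightarrow> nat) \<Rightarrow> bool" where
  "rainbow F col \<longleftrightarrow> (\<forall>v. col v < 3) \<and> (\<forall>f\<in>F. inj_on col f)"

definition coedge :: "nat set set \<Rightarrow> nat \<Rightarrow> nat \<Rightarrow> bool" where
  "coedge F a b \<longleftrightarrow> (\<exists>f\<in>F. a \<in> f \<and> b \<in> f)"

definition PairP :: "nat set set \<Rightarrow> bool" where
  "PairP F \<longleftrightarrow> (\<forall>r w c c'. r \<noteq> w \<longrightarrow> c < 3 \<longrightarrow> c' < 3 \<longrightarrow> (coedge F r w \<longrightarrow> c \<noteq> c') \<longrightarrow>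
      (\<exists>col. rainbow F col \<and> col r = c \<and> col w = c'))"

definition other :: "nat \<Rightarrow> nat \<Rightarrow> nat" where
  "other a b = (if 0 \<noteq> a \<and> 0 \<noteq> b then 0 else if 1 \<noteq> a \<and> 1 \<noteq> b then 1 else 2)"

lemma other: "other a b \<noteq> a" "other a b \<noteq> b" "other a b < 3"
  unfolding other_def by auto

lemma rainbow_sel:
  assumes R: "\<And>v. rainbow F (sel v)" and C: "\<And>a b. conn F a b \<Longrightarrow> sel a = sel b"
  shows "rainbow F (\<lambda>v. sel v v)"
  unfolding rainbow_def
proof (intro conjI allI ballI)
  fix v show "sel v v < 3" using R unfolding rainbow_def by blast
next
  fix f assume f: "f \<in> F"
  show "inj_on (\<lambda>v. sel v v) f"
  proof (rule inj_onI)
    fix x y assume xy: "x \<in> f" "y \<in> f" "sel x x = sel y y"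
    have "sel x = sel y" using C conn_edge[OF f xy(1) xy(2)] by blast
    then have "sel x x = sel x y" using xy(3) by simp
    moreover have "inj_on (sel x) f" using R f unfolding rainbow_def by blast
    ultimately show "x = y" using xy by (meson inj_onD)
  qed
qed

lemma PairP_R:
  assumes P: "PairP F" and d: "d < 3"
  shows "\<exists>col. rainbow F col \<and> col t = d"
proof -
  have o: "other d d \<noteq> d" by (rule other(1))
  have "Suc t \<noteq> t" "other d d < 3" "coedge F t (Suc t) \<longrightarrow> d \<noteq> other d d" using o other(3) by auto
  then show ?thesis using P d unfolding PairP_def by (metis (no_types, lifting))
qed

lemma rainbow_insert:
  assumes "rainbow F col" "e = {x, y, z}" "col x \<noteq> col y" "col x \<noteq> col z" "col y \<noteq> col z"
  shows "rainbow (insert e F) col"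
proof -
  have "inj_on col {x, y, z}" unfolding inj_on_def using assms(3-5) by force
  moreover have "\<forall>f\<in>F. inj_on col f" "\<forall>v. col v < 3" using assms(1) unfolding rainbow_def by simp_all
  ultimately show ?thesis unfolding rainbow_def
  proof (intro conjI ballI)
    fix f assume "f \<in> insert e F"
    then consider "f = e" | "f \<in> F" by blast
    then show "inj_on col f"
    proof cases
      case 1 then show ?thesis using \<open>inj_on col {x, y, z}\<close> assms(2) by simp
    next
      case 2 then show ?thesis using \<open>\<forall>f\<in>F. inj_on col f\<close> by blast
    qed
  qed (use \<open>\<forall>v. col v < 3\<close> in blast)
qed

definition Rc :: "nat set set \<Rightarrow> nat \<Rightarrow> nat \<Rightarrow> (nat \<Rightarrow> nat)" where
  "Rc F t d = (SOME col. rainbow F col \<and> col t = d)"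

definition Pc :: "nat set set \<Rightarrow> nat \<Rightarrow> nat \<Rightarrow> nat \<Rightarrow> nat \<Rightarrow> (nat \<Rightarrow> nat)" where
  "Pc F p t d1 d2 = (SOME col. rainbow F col \<and> col p = d1 \<and> col t = d2)"

lemma Rc: "PairP F \<Longrightarrow> d < 3 \<Longrightarrow> rainbow F (Rc F t d) \<and> Rc F t d t = d"
proof -
  assume "PairP F" "d < 3"
  then have "\<exists>col. rainbow F col \<and> col t = d" by (rule PairP_R)
  then show ?thesis unfolding Rc_def by (rule someI_ex)
qed

lemma Pc: "PairP F \<Longrightarrow> p \<noteq> t \<Longrightarrow> d1 < 3 \<Longrightarrow> d2 < 3 \<Longrightarrow> (coedge F p t \<longrightarrow> d1 \<noteq> d2) \<Longrightarrow>
    rainbow F (Pc F p t d1 d2) \<and> Pc F p t d1 d2 p = d1 \<and> Pc F p t d1 d2 t = d2"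
proof -
  assume P: "PairP F" and a: "p \<noteq> t" "d1 < 3" "d2 < 3" "coedge F p t \<longrightarrow> d1 \<noteq> d2"
  have "\<exists>col. rainbow F col \<and> col p = d1 \<and> col t = d2"
    using P[unfolded PairP_def, rule_format, OF a(1) a(2) a(3)] a(4) by blast
  then show ?thesis unfolding Pc_def by (rule someI_ex)
qed


lemma coedge_mono: "coedge F a b \<Longrightarrow> coedge (insert e F) a b"
  unfolding coedge_def by blast

lemma conn_via: "conn F a b \<Longrightarrow> conn F a c \<Longrightarrow> conn F b c"
  using conn_trans conn_sym by blast

lemma pair_step:
  assumes P: "PairP F"
    and e: "e = {x, y, z}" and dxy: "x \<noteq> y" "x \<noteq> z" "y \<noteq> z"
    and nc: "\<not> conn F x y" "\<not> conn F x z" "\<not> conn F y z"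
    and rw: "r \<noteq> w" "c < 3" "c' < 3" "coedge (insert e F) r w \<longrightarrow> c \<noteq> c'"
    and lab: "\<not> conn F r y" "\<not> conn F r z" "\<not> conn F r w \<longrightarrow> \<not> conn F w x \<and> \<not> conn F w z"
  shows "\<exists>col. rainbow (insert e F) col \<and> col r = c \<and> col w = c'"
proof (cases "conn F r w")
  case A: True
  have cF: "coedge F r w \<longrightarrow> c \<noteq> c'" using rw(4) coedge_mono by blast
  define c1 where "c1 = Pc F r w c c'"
  have c1: "rainbow F c1" "c1 r = c" "c1 w = c'" using Pc[OF P rw(1) rw(2) rw(3) cF] unfolding c1_def by auto
  define cX where "cX = (if conn F r x then c1 else Rc F x 0)"
  have cX: "rainbow F cX" using c1 Rc[OF P, of 0 x] unfolding cX_def by auto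
  define dx where "dx = cX x"
  have dx: "dx < 3" using cX unfolding rainbow_def dx_def by blast
  define dy where "dy = other dx dx"
  define dz where "dz = other dx dy"
  have dd: "dy < 3" "dz < 3" "dx \<noteq> dy" "dx \<noteq> dz" "dy \<noteq> dz"
    unfolding dy_def dz_def using other by metis+
  define cY where "cY = Rc F y dy"
  define cZ where "cZ = Rc F z dz"
  have cY: "rainbow F cY" "cY y = dy" using Rc[OF P dd(1)] unfolding cY_def by auto
  have cZ: "rainbow F cZ" "cZ z = dz" using Rc[OF P dd(2)] unfolding cZ_def by auto
  define sel where "sel = (\<lambda>v. if conn F x v then cX else if conn F y v then cY else if conn F z v then cZ else c1)"
  have selR: "\<And>v. rainbow F (sel v)" unfolding sel_def using cX cY cZ c1 by simp
  have selC: "\<And>a b. conn F a b \<Longrightarrow> sel a = sel b"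
  proof -
    fix a b assume ab: "conn F a b"
    show "sel a = sel b" unfolding sel_def using conn_iff[OF ab, of x] conn_iff[OF ab, of y] conn_iff[OF ab, of z] by simp
  qed
  define col where "col = (\<lambda>v. sel v v)"
  have rF: "rainbow F col" unfolding col_def by (rule rainbow_sel[OF selR selC])
  have ncs: "\<not> conn F y x" "\<not> conn F z x" "\<not> conn F z y" using nc conn_sym by blast+
  have colx: "col x = dx" unfolding col_def sel_def dx_def using conn_refl by simp
  have coly: "col y = dy" unfolding col_def sel_def using conn_refl nc(1) cY by simp
  have colz: "col z = dz" unfolding col_def sel_def using conn_refl nc(2) nc(3) cZ by simp
  have rI: "rainbow (insert e F) col"
    by (rule rainbow_insert[OF rF e]) (simp_all add: colx coly colz dd)
  have colr: "col r = c"
  proof (cases "conn F r x")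
    case True
    then have "conn F x r" by (rule conn_sym)
    then show ?thesis unfolding col_def sel_def cX_def using True c1 by simp
  next
    case False
    have "\<not> conn F x r" "\<not> conn F y r" "\<not> conn F z r" using False lab conn_sym by blast+
    then show ?thesis unfolding col_def sel_def using c1 by simp
  qed
  have colw: "col w = c'"
  proof (cases "conn F r x")
    case True
    then have "conn F x w" using A conn_via by blast
    then show ?thesis unfolding col_def sel_def cX_def using True c1 by simp
  next
    case False
    have "\<not> conn F x w" using False A conn_trans conn_sym by blast
    moreover have "\<not> conn F y w" using lab(1) A conn_trans conn_sym by blast
    moreover have "\<not> conn F z w" using lab(2) A conn_trans conn_sym by blast
    ultimately show ?thesis unfolding col_def sel_def using c1 by simp
  qed
  show ?thesis using rI colr colw by blast
next
  case B: False
  define dx where "dx = (if r = x then c else if w = y then other c c' else other c c)"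
  define dy where "dy = (if w = y then c' else other c' dx)"
  define dz where "dz = other dx dy"
  have dx3: "dx < 3" unfolding dx_def using rw(2) other(3) by simp
  have dy3: "dy < 3" unfolding dy_def using rw(3) other(3) by simp
  have dz3: "dz < 3" unfolding dz_def using other(3) by simp
  have dxc: "r \<noteq> x \<longrightarrow> dx \<noteq> c" unfolding dx_def using other(1) by simp
  have dyc: "w \<noteq> y \<longrightarrow> dy \<noteq> c'" unfolding dy_def using other(1) by simp
  have dxy: "dx \<noteq> dy"
  proof (cases "r = x")
    case True
    show ?thesis
    proof (cases "w = y")
      case True
      have "coedge (insert e F) r w" unfolding coedge_def e using \<open>r = x\<close> True by blast
      then show ?thesis using rw(4) \<open>r = x\<close> True unfolding dx_def dy_def by simp
    next
      case False
      have "other c' c \<noteq> c" by (rule other(2))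
      then show ?thesis unfolding dx_def dy_def using \<open>r = x\<close> False by simp
    qed
  next
    case False
    show ?thesis
    proof (cases "w = y")
      case True
      have "other c c' \<noteq> c'" by (rule other(2))
      then show ?thesis unfolding dx_def dy_def using False True by simp
    next
      case False
      have "other c' dx \<noteq> dx" by (rule other(2))
      then show ?thesis unfolding dy_def using False by simp
    qed
  qed
  have dzx: "dz \<noteq> dx" "dz \<noteq> dy" unfolding dz_def using other(1,2) by auto
  define cX where "cX = (if r = x then Rc F x dx else if conn F r x then Pc F r x c dx else Rc F x dx)"
  define cY where "cY = (if w = y then Rc F y dy else if conn F w y then Pc F w y c' dy else Rc F y dy)"
  define cZ where "cZ = Rc F z dz"
  define cR where "cR = Rc F r c"
  define cW where "cW = Rc F w c'"
  have RcX: "rainbow F (Rc F x dx) \<and> Rc F x dx x = dx" using Rc[OF P dx3] .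
  have RcY: "rainbow F (Rc F y dy) \<and> Rc F y dy y = dy" using Rc[OF P dy3] .
  have cXp: "rainbow F cX \<and> cX x = dx \<and> (conn F r x \<longrightarrow> cX r = c)"
  proof (cases "r = x")
    case True then show ?thesis unfolding cX_def using RcX dx_def by simp
  next
    case False
    show ?thesis
    proof (cases "conn F r x")
      case True
      have "coedge F r x \<longrightarrow> c \<noteq> dx" using dxc False by simp
      then have "rainbow F (Pc F r x c dx) \<and> Pc F r x c dx r = c \<and> Pc F r x c dx x = dx"
        using Pc[OF P False rw(2) dx3] by blast
      then show ?thesis unfolding cX_def using False True by simp
    next
      case nc': False
      then show ?thesis unfolding cX_def using False RcX by simp
    qed
  qed
  have cYp: "rainbow F cY \<and> cY y = dy \<and> (conn F w y \<longrightarrow> cY w = c')"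
  proof (cases "w = y")
    case True then show ?thesis unfolding cY_def using RcY dy_def by simp
  next
    case False
    show ?thesis
    proof (cases "conn F w y")
      case True
      have "coedge F w y \<longrightarrow> c' \<noteq> dy" using dyc False by simp
      then have "rainbow F (Pc F w y c' dy) \<and> Pc F w y c' dy w = c' \<and> Pc F w y c' dy y = dy"
        using Pc[OF P False rw(3) dy3] by blast
      then show ?thesis unfolding cY_def using False True by simp
    next
      case nc': False
      then show ?thesis unfolding cY_def using False RcY by simp
    qed
  qed
  have cZ: "rainbow F cZ" "cZ z = dz" using Rc[OF P dz3] unfolding cZ_def by auto
  have cR: "rainbow F cR" "cR r = c" using Rc[OF P rw(2)] unfolding cR_def by auto
  have cW: "rainbow F cW" "cW w = c'" using Rc[OF P rw(3)] unfolding cW_def by auto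
  define sel where "sel = (\<lambda>v. if conn F x v then cX else if conn F y v then cY else if conn F z v then cZ
      else if conn F r v then cR else cW)"
  have selR: "\<And>v. rainbow F (sel v)" unfolding sel_def using cXp cYp cZ cR cW by simp
  have selC: "\<And>a b. conn F a b \<Longrightarrow> sel a = sel b"
  proof -
    fix a b assume ab: "conn F a b"
    show "sel a = sel b" unfolding sel_def
      using conn_iff[OF ab, of x] conn_iff[OF ab, of y] conn_iff[OF ab, of z] conn_iff[OF ab, of r] by simp
  qed
  define col where "col = (\<lambda>v. sel v v)"
  have rF: "rainbow F col" unfolding col_def by (rule rainbow_sel[OF selR selC])
  have colx: "col x = dx" unfolding col_def sel_def using conn_refl cXp by simp
  have coly: "col y = dy" unfolding col_def sel_def using conn_refl nc(1) cYp by simp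
  have colz: "col z = dz" unfolding col_def sel_def using conn_refl nc(2) nc(3) cZ by simp
  have rI: "rainbow (insert e F) col"
    by (rule rainbow_insert[OF rF e]) (simp_all add: colx coly colz dxy dzx[symmetric])
  have colr: "col r = c"
  proof (cases "conn F r x")
    case True
    then have "conn F x r" by (rule conn_sym)
    then show ?thesis unfolding col_def sel_def using True cXp by simp
  next
    case False
    have "\<not> conn F x r" "\<not> conn F y r" "\<not> conn F z r" using False lab conn_sym by blast+
    then show ?thesis unfolding col_def sel_def using cR conn_refl by simp
  qed
  have colw: "col w = c'"
  proof -
    have nxw: "\<not> conn F x w" using lab(3) B conn_sym by blast
    show ?thesis
    proof (cases "conn F w y")
      case True
      then have "conn F y w" by (rule conn_sym)
      then show ?thesis unfolding col_def sel_def using nxw True cYp by simp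
    next
      case False
      have "\<not> conn F y w" "\<not> conn F z w" "\<not> conn F r w" using False lab(3) B conn_sym by blast+
      then show ?thesis unfolding col_def sel_def using nxw cW by simp
    qed
  qed
  show ?thesis using rI colr colw by blast
qed


definition labelled :: "nat set set \<Rightarrow> nat set \<Rightarrow> nat \<Rightarrow> nat \<Rightarrow> nat \<Rightarrow> nat \<Rightarrow> nat \<Rightarrow> bool" where
  "labelled F e r w x y z \<longleftrightarrow> e = {x, y, z} \<and> x \<noteq> y \<and> x \<noteq> z \<and> y \<noteq> z \<and>
     \<not> conn F x y \<and> \<not> conn F x z \<and> \<not> conn F y z \<and> \<not> conn F r y \<and> \<not> conn F r z \<and>
     (\<not> conn F r w \<longrightarrow> \<not> conn F w x \<and> \<not> conn F w z)"

lemma label1: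
  assumes e: "e = {x0, y0, z0}" and d: "x0 \<noteq> y0" "x0 \<noteq> z0" "y0 \<noteq> z0"
    and nc: "\<not> conn F x0 y0" "\<not> conn F x0 z0" "\<not> conn F y0 z0"
    and r: "\<not> conn F r y0" "\<not> conn F r z0" "\<not> conn F r w \<longrightarrow> \<not> conn F w x0"
  shows "\<exists>x y z. labelled F e r w x y z"
proof (cases "\<not> conn F r w \<and> conn F w z0")
  case True
  have "\<not> conn F w y0"
  proof
    assume "conn F w y0"
    then have "conn F z0 y0" using True conn_via by blast
    then show False using nc(3) conn_sym by blast
  qed
  moreover have "e = {x0, z0, y0}" using e by blast
  moreover have "\<not> conn F z0 y0" using nc(3) conn_sym by blast
  ultimately have "labelled F e r w x0 z0 y0" unfolding labelled_def using d nc r True by blast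
  then show ?thesis by blast
next
  case False
  then have "labelled F e r w x0 y0 z0" unfolding labelled_def using e d nc r by blast
  then show ?thesis by blast
qed

lemma label:
  assumes e: "e = {x0, y0, z0}" and d: "x0 \<noteq> y0" "x0 \<noteq> z0" "y0 \<noteq> z0"
    and nc: "\<not> conn F x0 y0" "\<not> conn F x0 z0" "\<not> conn F y0 z0"
  shows "\<exists>x y z. labelled F e r w x y z"
proof -
  have ncs: "\<not> conn F y0 x0" "\<not> conn F z0 x0" "\<not> conn F z0 y0" using nc conn_sym by blast+
  have e1: "e = {y0, x0, z0}" "e = {z0, x0, y0}" using e by blast+
  show ?thesis
  proof (cases "conn F r x0")
    case True
    have "\<not> conn F r y0" "\<not> conn F r z0" using True nc conn_via by blast+
    moreover have "\<not> conn F r w \<longrightarrow> \<not> conn F w x0" using True conn_trans conn_sym by blast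
    ultimately show ?thesis using label1[OF e d nc] by blast
  next
    case nx: False
    show ?thesis
    proof (cases "conn F r y0")
      case True
      have "\<not> conn F r z0" using True nc conn_via by blast
      moreover have "\<not> conn F r w \<longrightarrow> \<not> conn F w y0" using True conn_trans conn_sym by blast
      ultimately show ?thesis using label1[OF e1(1) d(1)[symmetric] d(3) d(2) ncs(1) nc(3) nc(2)] nx by blast
    next
      case ny: False
      show ?thesis
      proof (cases "conn F r z0")
        case True
        have "\<not> conn F r w \<longrightarrow> \<not> conn F w z0" using True conn_trans conn_sym by blast
        then show ?thesis using label1[OF e1(2) d(2)[symmetric] d(3)[symmetric] d(1) ncs(2) ncs(3) nc(1)] nx ny by blast
      next
        case nz: False
        show ?thesis
        proof (cases "conn F w x0")
          case True
          have "\<not> conn F w y0" using True nc conn_via by blast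
          then show ?thesis using label1[OF e1(1) d(1)[symmetric] d(3) d(2) ncs(1) nc(3) nc(2)] nx nz by blast
        next
          case False
          then show ?thesis using label1[OF e d nc] ny nz by blast
        qed
      qed
    qed
  qed
qed

lemma pair_lemma:
  assumes "finite F" shows "noCyc F \<Longrightarrow> (\<forall>f\<in>F. card f = 3) \<Longrightarrow> PairP F"
  using assms
proof (induction F rule: finite_induct)
  case empty
  show ?case unfolding PairP_def
  proof (intro allI impI)
    fix r w c c' :: nat assume a: "r \<noteq> w" "c < 3" "c' < 3"
    define col where "col = (\<lambda>v. if v = r then c else if v = w then c' else 0)"
    have "rainbow {} col" unfolding rainbow_def col_def using a by simp
    moreover have "col r = c" "col w = c'" unfolding col_def using a by simp_all
    ultimately show "\<exists>col. rainbow {} col \<and> col r = c \<and> col w = c'" by blast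
  qed
next
  case (insert e F)
  have P: "PairP F" using insert noCyc_mono[OF insert.prems(1)] by blast
  have "card e = 3" using insert.prems(2) by blast
  then obtain x0 y0 z0 where e: "e = {x0, y0, z0}" and d: "x0 \<noteq> y0" "y0 \<noteq> z0" "x0 \<noteq> z0"
    by (auto simp: card_3_iff)
  have nc: "\<not> conn F x0 y0" "\<not> conn F x0 z0" "\<not> conn F y0 z0"
    using no_conn[OF insert.prems(1) insert.hyps(2)] e d by blast+
  show ?case unfolding PairP_def
  proof (intro allI impI)
    fix r w c c' :: nat assume a: "r \<noteq> w" "c < 3" "c' < 3" "coedge (insert e F) r w \<longrightarrow> c \<noteq> c'"
    obtain x y z where l: "labelled F e r w x y z" using label[OF e d(1) d(3) d(2) nc] by blast
    show "\<exists>col. rainbow (insert e F) col \<and> col r = c \<and> col w = c'"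
      using pair_step[OF P _ _ _ _ _ _ _ a] l unfolding labelled_def by blast
  qed
qed


lemma hmul_noHAv: "hmul E a b \<noteq> HAv t"
  by (cases a; cases b) (simp_all split: if_split)

lemma W1:
  assumes "p \<noteq> []" "wval (hmul E) \<theta> p = HAv t"
  shows "\<exists>z. p = [z] \<and> \<theta> z = HAv t"
proof (cases p rule: remdups_adj.cases)
  case 1 then show ?thesis using assms by simp
next
  case (2 z) then show ?thesis using assms by simp
next
  case (3 z1 z2 zs) then show ?thesis using assms hmul_noHAv by simp
qed

lemma W2:
  assumes L: "lin E" and p: "p \<noteq> []" and v: "wval (hmul E) \<theta> p = HCv w"
  shows "(\<exists>z. p = [z] \<and> \<theta> z = HCv w) \<or>
         (\<exists>z1 z2 s t. p = [z1, z2] \<and> \<theta> z1 = HAv s \<and> \<theta> z2 = HAv t \<and> {s, t, w} \<in> E)"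
proof (cases p rule: remdups_adj.cases)
  case 1 then show ?thesis using p by simp
next
  case (2 z) then show ?thesis using v by simp
next
  case (3 z1 z2 zs)
  let ?b = "wval (hmul E) \<theta> (z2 # zs)"
  have hv: "hmul E (\<theta> z1) ?b = HCv w" using v 3 by simp
  then have ne: "hmul E (\<theta> z1) ?b \<noteq> Inf" by simp
  consider (c1) s t w' where "\<theta> z1 = HAv s" "?b = HAv t" "{s, t, w'} \<in> E"
    | (c2) s where "\<theta> z1 = HAv s" "?b = HCv s" "hmul E (\<theta> z1) ?b = HA"
    | (c3) s where "\<theta> z1 = HCv s" "?b = HAv s" "hmul E (\<theta> z1) ?b = HA"
    using hmul_nonInf[OF ne] by blast
  then show ?thesis
  proof cases
    case c1
    obtain z where z: "z2 # zs = [z]" "\<theta> z = HAv t" using W1[OF _ c1(2)] by blast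
    have "hmul E (HAv s) (HAv t) = HCv w" using hv unfolding c1(1) c1(2) .
    then have "{s, t, w} \<in> E" by (rule hmul_AA_C[OF L])
    moreover have "p = [z1, z]" using 3 z(1) by simp
    ultimately show ?thesis using c1(1) z(2) by blast
  next
    case c2 then show ?thesis using hv by simp
  next
    case c3 then show ?thesis using hv by simp
  qed
qed

lemma Sc_None_prop: "z \<in> set p \<Longrightarrow> \<phi> z = None \<Longrightarrow> wval Sc_mul \<phi> p = None"
proof (induction p rule: induct_list012)
  case (3 x y zs)
  show ?case
  proof (cases "z = x")
    case True then show ?thesis using 3 by simp
  next
    case False
    then have "wval Sc_mul \<phi> (y # zs) = None" using 3 by simp
    then show ?thesis by simp
  qed
qed auto

definition U3 :: "nat set" where "U3 = {0, 1, 2}"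

lemma Sc_size:
  assumes phi: "\<And>z. z \<in> set p \<Longrightarrow> \<phi> z \<in> Sc_carrier"
  shows "p \<noteq> [] \<Longrightarrow> wval Sc_mul \<phi> p = Some S \<Longrightarrow> length p \<le> card S \<and> S \<subseteq> U3 \<and> S \<noteq> {}"
  using phi
proof (induction p arbitrary: S rule: induct_list012)
  case (2 z)
  then have "\<phi> z = Some S" by simp
  then have "S \<noteq> {}" "S \<subseteq> U3" using 2(3) unfolding Sc_carrier_def U3_def by auto
  moreover have "finite S" using \<open>S \<subseteq> U3\<close> finite_subset unfolding U3_def by blast
  ultimately show ?case by (simp add: Suc_leI card_gt_0_iff)
next
  case (3 z1 z2 zs)
  have "Sc_mul (\<phi> z1) (wval Sc_mul \<phi> (z2 # zs)) = Some S" using 3(4) by simp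
  then obtain A B where AB: "\<phi> z1 = Some A" "wval Sc_mul \<phi> (z2 # zs) = Some B" "A \<inter> B = {}" "S = A \<union> B"
    unfolding Sc_mul_Some by blast
  have IH: "length (z2 # zs) \<le> card B \<and> B \<subseteq> U3 \<and> B \<noteq> {}" using 3(2)[OF _ AB(2)] 3(5) by simp
  have A: "A \<noteq> {}" "A \<subseteq> U3" using 3(5)[of z1] AB(1) unfolding Sc_carrier_def U3_def by auto
  have fin: "finite A" "finite B" using A IH finite_subset unfolding U3_def by blast+
  have "card S = card A + card B" using AB(3,4) fin by (simp add: card_Un_disjoint)
  moreover have "card A \<ge> 1" using A fin by (simp add: Suc_leI card_gt_0_iff)
  ultimately show ?case using IH A AB(4) by simp
qed simp


definition enc :: "(nat \<Rightarrow> nat) \<Rightarrow> hs \<Rightarrow> nat set option" where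
  "enc col h = (case h of Inf \<Rightarrow> None | HA \<Rightarrow> Some U3 | HAv r \<Rightarrow> Some {col r} | HCv r \<Rightarrow> Some (U3 - {col r}))"

lemma enc_simps[simp]: "enc col Inf = None" "enc col HA = Some U3" "enc col (HAv r) = Some {col r}"
  "enc col (HCv r) = Some (U3 - {col r})"
  unfolding enc_def by simp_all

lemma three_col:
  assumes "a < 3" "b < 3" "c < 3" "a \<noteq> b" "a \<noteq> c" "b \<noteq> c"
  shows "{a, b} = U3 - {c}"
proof -
  have s: "{a, b} \<subseteq> U3 - {c}" using assms unfolding U3_def by auto
  have c1: "card {a, b} = 2" using assms(4) by simp
  have "c = 0 \<or> c = 1 \<or> c = 2" using assms(3) by arith
  then have c2: "card (U3 - {c}) = 2" unfolding U3_def by auto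
  show ?thesis using card_subset_eq[OF _ s] c1 c2 unfolding U3_def by simp
qed

lemma col_in: "c < 3 \<Longrightarrow> c \<in> U3" unfolding U3_def by auto

lemma enc_carrier: "(\<forall>v. col v < 3) \<Longrightarrow> enc col h \<in> Sc_carrier"
proof (cases h)
  case (HCv r)
  assume a: "\<forall>v. col v < 3"
  have "col r = 0 \<or> col r = 1 \<or> col r = 2" using a[rule_format, of r] by arith
  then have "U3 - {col r} \<noteq> {}" unfolding U3_def by auto
  moreover have "U3 - {col r} \<subseteq> {0, 1, 2}" unfolding U3_def by auto
  ultimately show ?thesis using HCv unfolding Sc_carrier_def by auto
next
  case (HAv r)
  assume a: "\<forall>v. col v < 3"
  have "col r = 0 \<or> col r = 1 \<or> col r = 2" using a[rule_format, of r] by arith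
  then have "{col r} \<subseteq> {0, 1, 2}" by auto
  then show ?thesis using HAv unfolding Sc_carrier_def by auto
qed (auto simp: Sc_carrier_def U3_def)

locale keyset =
  fixes E :: "nat set set" and \<theta> :: "nat \<Rightarrow> hs" and Z :: "nat set" and R :: "nat set" and col :: "nat \<Rightarrow> nat"
  assumes L: "lin E"
    and RZ: "\<And>z r. z \<in> Z \<Longrightarrow> \<theta> z = HAv r \<or> \<theta> z = HCv r \<Longrightarrow> r \<in> R"
    and rb: "rainbow {f\<in>E. f \<subseteq> R} col"
begin

definition \<phi> :: "nat \<Rightarrow> nat set option" where
  "\<phi> z = (if z \<in> Z then enc col (\<theta> z) else None)"

lemma col3: "col v < 3" using rb unfolding rainbow_def by blast

lemma \<phi>_carrier: "\<phi> z \<in> Sc_carrier"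
  unfolding \<phi>_def using enc_carrier[of col] col3 by (simp add: Sc_carrier_def)

lemma edge_cols:
  assumes e: "{s, t, w} \<in> E" and R: "s \<in> R" "t \<in> R" "w \<in> R"
  shows "col s \<noteq> col t" "col s \<noteq> col w" "col t \<noteq> col w"
proof -
  have d: "s \<noteq> t" "s \<noteq> w" "t \<noteq> w" using edge_distinct[OF L e] by auto
  have "{s, t, w} \<in> {f\<in>E. f \<subseteq> R}" using e R by simp
  then have "inj_on col {s, t, w}" using rb unfolding rainbow_def by blast
  then show "col s \<noteq> col t" "col s \<noteq> col w" "col t \<noteq> col w" using d by (auto dest: inj_onD)
qed

lemma hom:
  "p \<noteq> [] \<Longrightarrow> set p \<subseteq> Z \<Longrightarrow> wval (hmul E) \<theta> p \<noteq> Inf \<Longrightarrow> (\<forall>w. wval (hmul E) \<theta> p = HCv w \<longrightarrow> w \<in> R) \<Longrightarrow>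
    wval Sc_mul \<phi> p = enc col (wval (hmul E) \<theta> p)"
proof (induction p rule: induct_list012)
  case (2 z)
  then show ?case unfolding \<phi>_def by simp
next
  case (3 z y zs)
  let ?b = "wval (hmul E) \<theta> (y # zs)"
  have zZ: "z \<in> Z" using 3(4) by simp
  have ne: "hmul E (\<theta> z) ?b \<noteq> Inf" using 3(5) by simp
  have bne: "?b \<noteq> Inf"
  proof
    assume "?b = Inf"
    then have "hmul E (\<theta> z) ?b = Inf" by (cases "\<theta> z") simp_all
    then show False using ne by simp
  qed
  have sub: "set (y # zs) \<subseteq> Z" using 3(4) by simp
  consider (c1) s t w' where "\<theta> z = HAv s" "?b = HAv t" "{s, t, w'} \<in> E"
    | (c2) s where "\<theta> z = HAv s" "?b = HCv s" "hmul E (\<theta> z) ?b = HA"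
    | (c3) s where "\<theta> z = HCv s" "?b = HAv s" "hmul E (\<theta> z) ?b = HA"
    using hmul_nonInf[OF ne] by blast
  then show ?case
  proof cases
    case c1
    have IH: "wval Sc_mul \<phi> (y # zs) = Some {col t}" using 3(2)[OF _ sub bne] c1(2) by simp
    have hw: "hmul E (HAv s) (HAv t) = HCv w'" by (rule hmul_AA_edge[OF L c1(3)])
    have val: "wval (hmul E) \<theta> (z # y # zs) = HCv w'" using hw c1(1) c1(2) by simp
    have sR: "s \<in> R" using RZ[OF zZ] c1(1) by blast
    obtain y' where y': "y # zs = [y']" "\<theta> y' = HAv t" using W1[OF _ c1(2)] by blast
    have tR: "t \<in> R" using RZ[of y' t] y' sub by simp
    have wR: "w' \<in> R" using 3(6) val by blast
    have cc: "col s \<noteq> col t" "col s \<noteq> col w'" "col t \<noteq> col w'" using edge_cols[OF c1(3) sR tR wR] .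
    have "{col s, col t} = U3 - {col w'}" using three_col[OF col3 col3 col3 cc] .
    moreover have "wval Sc_mul \<phi> (z # y # zs) = Sc_mul (Some {col s}) (Some {col t})"
      using IH zZ c1(1) unfolding \<phi>_def by simp
    moreover have "Sc_mul (Some {col s}) (Some {col t}) = Some {col s, col t}" using cc(1) by auto
    ultimately show ?thesis using val by simp
  next
    case c2
    have sR: "s \<in> R" using RZ[OF zZ] c2(1) by blast
    have IH: "wval Sc_mul \<phi> (y # zs) = Some (U3 - {col s})" using 3(2)[OF _ sub bne] c2(2) sR by simp
    have "wval Sc_mul \<phi> (z # y # zs) = Sc_mul (Some {col s}) (Some (U3 - {col s}))"
      using IH zZ c2(1) unfolding \<phi>_def by simp
    also have "\<dots> = Some U3" using col_in[OF col3[of s]] by auto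
    finally show ?thesis using c2 by simp
  next
    case c3
    have IH: "wval Sc_mul \<phi> (y # zs) = Some {col s}" using 3(2)[OF _ sub bne] c3(2) by simp
    have "wval Sc_mul \<phi> (z # y # zs) = Sc_mul (Some (U3 - {col s})) (Some {col s})"
      using IH zZ c3(1) unfolding \<phi>_def by simp
    also have "\<dots> = Some U3" using col_in[OF col3[of s]] by auto
    finally show ?thesis using c3 by simp
  qed
qed simp

end


fun wt :: "hs \<Rightarrow> nat" where
  "wt Inf = 0" | "wt HA = 3" | "wt (HAv r) = 1" | "wt (HCv r) = 2"

lemma card_U3_minus: "c < 3 \<Longrightarrow> card (U3 - {c}) = 2"
proof -
  assume "c < 3"
  then have "c = 0 \<or> c = 1 \<or> c = 2" by arith
  then show ?thesis unfolding U3_def by auto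
qed

lemma card_U3: "card U3 = 3" unfolding U3_def by simp

lemma enc_card: "(\<And>v. col v < 3) \<Longrightarrow> enc col h = Some A \<Longrightarrow> card A = wt h \<and> finite A"
proof (cases h)
  case (HCv r)
  assume "\<And>v. col v < 3" "enc col h = Some A"
  then have "A = U3 - {col r}" "col r < 3" using HCv by auto
  moreover have "finite U3" unfolding U3_def by simp
  ultimately show ?thesis using HCv card_U3_minus[of "col r"] by simp
qed (auto simp: card_U3 U3_def)

lemma wt1: "wt h = 1 \<Longrightarrow> \<exists>r. h = HAv r" by (cases h) auto
lemma wt2: "wt h = 2 \<Longrightarrow> \<exists>r. h = HCv r" by (cases h) auto
lemma wt3: "wt h = 3 \<Longrightarrow> h = HA" by (cases h) auto
lemma wt_pos: "h \<noteq> Inf \<Longrightarrow> wt h \<ge> 1" by (cases h) auto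

context keyset
begin

definition BAD :: "hs \<Rightarrow> nat list \<Rightarrow> bool" where
  "BAD x q \<longleftrightarrow>
     (\<exists>z1 z2 s t w0. x = HCv w0 \<and> q = [z1, z2] \<and> \<theta> z1 = HAv s \<and> \<theta> z2 = HAv t \<and> {s, t, w0} \<notin> E \<and> col s \<noteq> col t) \<or>
     (\<exists>z1 z2 r w. x = HA \<and> q = [z1, z2] \<and> ((\<theta> z1 = HAv r \<and> \<theta> z2 = HCv w) \<or> (\<theta> z1 = HCv w \<and> \<theta> z2 = HAv r)) \<and>
        r \<noteq> w \<and> col r = col w) \<or>
     (\<exists>z1 z2 z3 r1 r2 r3. x = HA \<and> q = [z1, z2, z3] \<and> \<theta> z1 = HAv r1 \<and> \<theta> z2 = HAv r2 \<and> \<theta> z3 = HAv r3 \<and>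
        {r1, r2, r3} \<notin> E \<and> col r1 \<noteq> col r2 \<and> col r1 \<noteq> col r3 \<and> col r2 \<noteq> col r3)"

lemma enc_theta: "z \<in> Z \<Longrightarrow> \<phi> z = enc col (\<theta> z)" unfolding \<phi>_def by simp

lemma encA: "enc col h = Some A \<Longrightarrow> card A = wt h \<and> finite A"
  using enc_card[of col h A] col3 by blast

lemma encNone: "enc col h = Some A \<Longrightarrow> h \<noteq> Inf"
  by (cases h) auto

lemma reflect:
  assumes q: "q \<noteq> []" "set q \<subseteq> Z" and xn: "x \<noteq> Inf"
    and y: "wval (hmul E) \<theta> q \<noteq> x" and eq: "wval Sc_mul \<phi> q = enc col x"
    and ZA: "\<And>p0 z. x = HAv p0 \<Longrightarrow> z \<in> Z \<Longrightarrow> \<theta> z = HAv p0"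
    and ZC: "\<And>w0 z. x = HCv w0 \<Longrightarrow> z \<in> Z \<Longrightarrow> \<theta> z = HCv w0 \<or> (\<exists>s. \<theta> z = HAv s)"
  shows "BAD x q"
proof -
  obtain S where S: "enc col x = Some S" using xn by (cases x) auto
  have cS: "card S = wt x" "finite S" using encA[OF S] by auto
  have wS: "wval Sc_mul \<phi> q = Some S" using eq S by simp
  have "length q \<le> card S \<and> S \<subseteq> U3 \<and> S \<noteq> {}" by (rule Sc_size[OF _ q(1) wS]) (rule \<phi>_carrier)
  then have len: "length q \<le> card S" by simp
  have wx: "wt x \<le> 3" using xn by (cases x) auto
  consider (l1) z1 where "q = [z1]" | (l2) z1 z2 where "q = [z1, z2]" | (l3) z1 z2 z3 where "q = [z1, z2, z3]"
    | (l4) z1 z2 z3 z4 zs where "q = z1 # z2 # z3 # z4 # zs"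
    using q(1) by (metis list.exhaust)
  then show ?thesis
  proof cases
    case l1
    have z1: "z1 \<in> Z" using q(2) l1 by simp
    have e1: "enc col (\<theta> z1) = Some S" using eq S enc_theta[OF z1] l1 by simp
    have w1: "wt (\<theta> z1) = wt x" using encA[OF e1] cS by simp
    have yv: "wval (hmul E) \<theta> q = \<theta> z1" using l1 by simp
    show ?thesis
    proof (cases x)
      case Inf then show ?thesis using xn by simp
    next
      case HA
      then have "\<theta> z1 = HA" using w1 wt3 by simp
      then show ?thesis using y yv HA by simp
    next
      case (HAv p0)
      then show ?thesis using ZA[OF HAv z1] y yv by simp
    next
      case (HCv w0)
      then have "wt (\<theta> z1) = 2" using w1 by simp
      then obtain w' where "\<theta> z1 = HCv w'" using wt2 by blast
      then have "\<theta> z1 = HCv w0" using ZC[OF HCv z1] by auto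
      then show ?thesis using y yv HCv by simp
    qed
  next
    case l2
    have z: "z1 \<in> Z" "z2 \<in> Z" using q(2) l2 by auto
    have "Sc_mul (enc col (\<theta> z1)) (enc col (\<theta> z2)) = Some S" using eq S enc_theta[OF z(1)] enc_theta[OF z(2)] l2 by simp
    then obtain A B where AB: "enc col (\<theta> z1) = Some A" "enc col (\<theta> z2) = Some B" "A \<inter> B = {}" "S = A \<union> B"
      unfolding Sc_mul_Some by blast
    have cA: "card A = wt (\<theta> z1)" "finite A" using encA[OF AB(1)] by auto
    have cB: "card B = wt (\<theta> z2)" "finite B" using encA[OF AB(2)] by auto
    have wsum: "wt (\<theta> z1) + wt (\<theta> z2) = wt x" using cS cA cB AB(3,4) by (simp add: card_Un_disjoint)
    have p1: "wt (\<theta> z1) \<ge> 1" "wt (\<theta> z2) \<ge> 1" using wt_pos encNone AB(1,2) by blast+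
    have yv: "wval (hmul E) \<theta> q = hmul E (\<theta> z1) (\<theta> z2)" using l2 by simp
    show ?thesis
    proof (cases x)
      case Inf then show ?thesis using xn by simp
    next
      case (HAv p0) then show ?thesis using wsum p1 by simp
    next
      case (HCv w0)
      have "wt (\<theta> z1) = 1" "wt (\<theta> z2) = 1" using wsum p1 HCv by simp_all
      then obtain s t where st: "\<theta> z1 = HAv s" "\<theta> z2 = HAv t" using wt1 by blast
      have "col s \<noteq> col t" using AB(1,2,3) st by auto
      moreover have "{s, t, w0} \<notin> E"
      proof
        assume "{s, t, w0} \<in> E"
        then have "hmul E (HAv s) (HAv t) = HCv w0" by (rule hmul_AA_edge[OF L])
        then show False using y yv st HCv by simp
      qed
      ultimately show ?thesis unfolding BAD_def using HCv l2 st by blast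
    next
      case HA
      have ws: "wt (\<theta> z1) + wt (\<theta> z2) = 3" using wsum HA by simp
      then consider "wt (\<theta> z1) = 1" "wt (\<theta> z2) = 2" | "wt (\<theta> z1) = 2" "wt (\<theta> z2) = 1" using p1 by arith
      then show ?thesis
      proof cases
        case 1
        obtain r where r: "\<theta> z1 = HAv r" using wt1 1 by blast
        obtain w where w: "\<theta> z2 = HCv w" using wt2 1 by blast
        have "{col r} \<inter> (U3 - {col w}) = {}" using AB(1,2,3) r w by simp
        then have cc: "col r = col w" using col_in[OF col3[of r]] by blast
        have "r \<noteq> w"
        proof
          assume "r = w" then have "hmul E (\<theta> z1) (\<theta> z2) = HA" using r w by simp
          then show False using y yv HA by simp
        qed
        then show ?thesis unfolding BAD_def using HA l2 r w cc by blast
      next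
        case 2
        obtain r where r: "\<theta> z2 = HAv r" using wt1 2 by blast
        obtain w where w: "\<theta> z1 = HCv w" using wt2 2 by blast
        have "(U3 - {col w}) \<inter> {col r} = {}" using AB(1,2,3) r w by simp
        then have cc: "col r = col w" using col_in[OF col3[of r]] by blast
        have "r \<noteq> w"
        proof
          assume "r = w" then have "hmul E (\<theta> z1) (\<theta> z2) = HA" using r w by simp
          then show False using y yv HA by simp
        qed
        then show ?thesis unfolding BAD_def using HA l2 r w cc by blast
      qed
    qed
  next
    case l3
    have z: "z1 \<in> Z" "z2 \<in> Z" "z3 \<in> Z" using q(2) l3 by auto
    have "Sc_mul (enc col (\<theta> z1)) (Sc_mul (enc col (\<theta> z2)) (enc col (\<theta> z3))) = Some S"
      using eq S enc_theta[OF z(1)] enc_theta[OF z(2)] enc_theta[OF z(3)] l3 by simp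
    then obtain A T where AT: "enc col (\<theta> z1) = Some A" "Sc_mul (enc col (\<theta> z2)) (enc col (\<theta> z3)) = Some T"
      "A \<inter> T = {}" "S = A \<union> T"
      unfolding Sc_mul_Some by blast
    then obtain B C where BC: "enc col (\<theta> z2) = Some B" "enc col (\<theta> z3) = Some C" "B \<inter> C = {}" "T = B \<union> C"
      unfolding Sc_mul_Some by blast
    have cA: "card A = wt (\<theta> z1)" "finite A" using encA[OF AT(1)] by auto
    have cB: "card B = wt (\<theta> z2)" "finite B" using encA[OF BC(1)] by auto
    have cC: "card C = wt (\<theta> z3)" "finite C" using encA[OF BC(2)] by auto
    have cT: "card T = card B + card C" "finite T" using cB cC BC(3,4) by (simp_all add: card_Un_disjoint)
    have wsum: "wt (\<theta> z1) + wt (\<theta> z2) + wt (\<theta> z3) = wt x" using cS cA cT AT(3,4) cB cC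
      by (simp add: card_Un_disjoint)
    have p1: "wt (\<theta> z1) \<ge> 1" "wt (\<theta> z2) \<ge> 1" "wt (\<theta> z3) \<ge> 1" using wt_pos encNone AT(1) BC(1,2) by blast+
    have w1: "wt (\<theta> z1) = 1" "wt (\<theta> z2) = 1" "wt (\<theta> z3) = 1" "wt x = 3" using wsum p1 wx by arith+
    have HA: "x = HA" using w1(4) wt3 by blast
    obtain r1 r2 r3 where r: "\<theta> z1 = HAv r1" "\<theta> z2 = HAv r2" "\<theta> z3 = HAv r3" using wt1 w1 by metis
    have cc: "col r1 \<noteq> col r2" "col r1 \<noteq> col r3" "col r2 \<noteq> col r3" using AT(1,3) BC r by auto
    have yv: "wval (hmul E) \<theta> q = hmul E (HAv r1) (hmul E (HAv r2) (HAv r3))" using l3 r by simp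
    have "{r1, r2, r3} \<notin> E"
    proof
      assume "{r1, r2, r3} \<in> E"
      then have "wval (hmul E) \<theta> q = HA" using yv hmul_AAA'[OF L] by simp
      then show False using y HA by simp
    qed
    then show ?thesis unfolding BAD_def using HA l3 r cc by blast
  next
    case l4
    then show ?thesis using len cS wx by simp
  qed
qed

end


lemma card3_sub_eq:
  assumes "card f = 3" "a \<in> f" "b \<in> f" "c \<in> f" "a \<noteq> b" "a \<noteq> c" "b \<noteq> c"
  shows "f = {a, b, c}"
proof -
  have s: "{a, b, c} \<subseteq> f" using assms by blast
  have fin: "finite f" using assms(1) by (metis card.infinite zero_neq_numeral)
  have "card {a, b, c} = 3" using assms(5-7) by simp
  then show ?thesis using card_subset_eq[OF fin s] assms(1) by simp
qed

lemma triangle: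
  assumes L: "lin E" and FE: "F \<subseteq> E" and nc: "noCyc F"
    and d: "a \<noteq> b" "a \<noteq> c" "b \<noteq> c"
    and f1: "f1 \<in> F" "a \<in> f1" "b \<in> f1"
    and f2: "f2 \<in> F" "b \<in> f2" "c \<in> f2"
    and f3: "f3 \<in> F" "c \<in> f3" "a \<in> f3"
  shows "{a, b, c} \<in> E"
proof -
  have c3: "\<And>f. f \<in> F \<Longrightarrow> card f = 3" using L FE unfolding lin_def by blast
  show ?thesis
  proof (cases "f1 = f2 \<or> f2 = f3 \<or> f1 = f3")
    case True
    then consider "f1 = f2" | "f2 = f3" | "f1 = f3" by blast
    then show ?thesis
    proof cases
      case 1
      then have "f1 = {a, b, c}" using card3_sub_eq[OF c3[OF f1(1)] f1(2) f1(3) _ d] f2 by simp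
      then show ?thesis using f1(1) FE by blast
    next
      case 2
      then have "f2 = {a, b, c}" using card3_sub_eq[OF c3[OF f2(1)] _ f2(2) f2(3) d] f3 by simp
      then show ?thesis using f2(1) FE by blast
    next
      case 3
      then have "f1 = {a, b, c}" using card3_sub_eq[OF c3[OF f1(1)] f1(2) f1(3) _ d] f3 by simp
      then show ?thesis using f1(1) FE by blast
    qed
  next
    case False
    have cyc: "\<forall>i<3. [a, b, c] ! i \<in> [f1, f2, f3] ! i \<and> [a, b, c] ! (Suc i mod 3) \<in> [f1, f2, f3] ! i"
    proof (intro allI impI)
      fix i :: nat assume i: "i < 3"
      then have "i = 0 \<or> i = 1 \<or> i = 2" by arith
      then show "[a, b, c] ! i \<in> [f1, f2, f3] ! i \<and> [a, b, c] ! (Suc i mod 3) \<in> [f1, f2, f3] ! i"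
        using f1 f2 f3 by auto
    qed
    have "distinct [a, b, c]" "distinct [f1, f2, f3]" "set [f1, f2, f3] \<subseteq> F" using d False f1 f2 f3 by auto
    then have "has_cycle_of_length F 3" unfolding has_cycle_of_length_def using cyc
      by (intro exI[of _ "[a, b, c]"] exI[of _ "[f1, f2, f3]"]) simp
    then show ?thesis using nc unfolding noCyc_def by blast
  qed
qed

lemma PairP_use:
  assumes "PairP F" "r \<noteq> w" "c < 3" "c' < 3" "coedge F r w \<longrightarrow> c \<noteq> c'"
  shows "\<exists>col. rainbow F col \<and> col r = c \<and> col w = c'"
  using assms(1) unfolding PairP_def using assms(2-5) by blast

definition badf :: "nat set set \<Rightarrow> (nat \<Rightarrow> hs) \<Rightarrow> (nat \<Rightarrow> nat) \<Rightarrow> hs \<Rightarrow> nat list \<Rightarrow> bool" where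
  "badf E \<theta> col x q \<longleftrightarrow>
     (\<exists>z1 z2 s t w0. x = HCv w0 \<and> q = [z1, z2] \<and> \<theta> z1 = HAv s \<and> \<theta> z2 = HAv t \<and> {s, t, w0} \<notin> E \<and> col s \<noteq> col t) \<or>
     (\<exists>z1 z2 r w. x = HA \<and> q = [z1, z2] \<and> ((\<theta> z1 = HAv r \<and> \<theta> z2 = HCv w) \<or> (\<theta> z1 = HCv w \<and> \<theta> z2 = HAv r)) \<and>
        r \<noteq> w \<and> col r = col w) \<or>
     (\<exists>z1 z2 z3 r1 r2 r3. x = HA \<and> q = [z1, z2, z3] \<and> \<theta> z1 = HAv r1 \<and> \<theta> z2 = HAv r2 \<and> \<theta> z3 = HAv r3 \<and>
        {r1, r2, r3} \<notin> E \<and> col r1 \<noteq> col r2 \<and> col r1 \<noteq> col r3 \<and> col r2 \<noteq> col r3)"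

lemma choose_col:
  assumes L: "lin E" and FE: "F \<subseteq> E" and nc: "noCyc F" and P: "PairP F"
    and part: "\<And>z1 z2 s w0. q = [z1, z2] \<Longrightarrow> x = HCv w0 \<Longrightarrow> (\<theta> z1 = HAv s \<or> \<theta> z2 = HAv s) \<Longrightarrow>
        \<exists>f\<in>F. s \<in> f \<and> w0 \<in> f \<and> s \<noteq> w0"
  shows "\<exists>col. rainbow F col \<and> \<not> badf E \<theta> col x q"
proof -
  obtain col0 where col0: "rainbow F col0" using PairP_R[OF P, of 0 0] by auto
  have cases: "(\<exists>z1 z2 s t w0. x = HCv w0 \<and> q = [z1, z2] \<and> \<theta> z1 = HAv s \<and> \<theta> z2 = HAv t \<and> {s, t, w0} \<notin> E) \<or>
    (\<exists>z1 z2 r w. x = HA \<and> q = [z1, z2] \<and> ((\<theta> z1 = HAv r \<and> \<theta> z2 = HCv w) \<or> (\<theta> z1 = HCv w \<and> \<theta> z2 = HAv r)) \<and> r \<noteq> w) \<or>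
    (\<exists>z1 z2 z3 r1 r2 r3. x = HA \<and> q = [z1, z2, z3] \<and> \<theta> z1 = HAv r1 \<and> \<theta> z2 = HAv r2 \<and> \<theta> z3 = HAv r3 \<and>
        {r1, r2, r3} \<notin> E) \<or> \<not> badf E \<theta> col0 x q"
  proof (rule ccontr)
    assume a: "\<not> ?thesis"
    then have n1: "\<not> (\<exists>z1 z2 s t w0. x = HCv w0 \<and> q = [z1, z2] \<and> \<theta> z1 = HAv s \<and> \<theta> z2 = HAv t \<and> {s, t, w0} \<notin> E)"
      and n2: "\<not> (\<exists>z1 z2 r w. x = HA \<and> q = [z1, z2] \<and> ((\<theta> z1 = HAv r \<and> \<theta> z2 = HCv w) \<or> (\<theta> z1 = HCv w \<and> \<theta> z2 = HAv r)) \<and> r \<noteq> w)"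
      and n3: "\<not> (\<exists>z1 z2 z3 r1 r2 r3. x = HA \<and> q = [z1, z2, z3] \<and> \<theta> z1 = HAv r1 \<and> \<theta> z2 = HAv r2 \<and> \<theta> z3 = HAv r3 \<and>
        {r1, r2, r3} \<notin> E)"
      and b: "badf E \<theta> col0 x q" by simp_all
    from b show False unfolding badf_def
      by (elim disjE exE conjE) (use n1 n2 n3 in blast)+
  qed
  consider (b1) z1 z2 s t w0 where "x = HCv w0" "q = [z1, z2]" "\<theta> z1 = HAv s" "\<theta> z2 = HAv t" "{s, t, w0} \<notin> E"
    | (b2) z1 z2 r w where "x = HA" "q = [z1, z2]" "(\<theta> z1 = HAv r \<and> \<theta> z2 = HCv w) \<or> (\<theta> z1 = HCv w \<and> \<theta> z2 = HAv r)" "r \<noteq> w"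
    | (b3) z1 z2 z3 r1 r2 r3 where "x = HA" "q = [z1, z2, z3]" "\<theta> z1 = HAv r1" "\<theta> z2 = HAv r2" "\<theta> z3 = HAv r3"
        "{r1, r2, r3} \<notin> E"
    | (none) "\<not> badf E \<theta> col0 x q"
    using cases by (elim disjE exE conjE) blast+
  then show ?thesis
  proof cases
    case b1
    have "\<exists>col. rainbow F col \<and> col s = col t"
    proof (cases "s = t")
      case True then show ?thesis using col0 by blast
    next
      case False
      obtain fs where fs: "fs \<in> F" "s \<in> fs" "w0 \<in> fs" "s \<noteq> w0" using part[OF b1(2) b1(1)] b1(3) by blast
      obtain ft where ft: "ft \<in> F" "t \<in> ft" "w0 \<in> ft" "t \<noteq> w0" using part[OF b1(2) b1(1)] b1(4) by blast
      have "\<not> coedge F s t"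
      proof
        assume "coedge F s t"
        then obtain f where f: "f \<in> F" "s \<in> f" "t \<in> f" unfolding coedge_def by blast
        have "{s, t, w0} \<in> E" using triangle[OF L FE nc False fs(4) ft(4) f ft(1) ft(2) ft(3) fs(1) fs(3) fs(2)] .
        then show False using b1(5) by simp
      qed
      then have "\<exists>col. rainbow F col \<and> col s = 0 \<and> col t = 0" using PairP_use[OF P False, of 0 0] by simp
      then show ?thesis by auto
    qed
    then obtain col where col: "rainbow F col" "col s = col t" by blast
    have "\<not> badf E \<theta> col x q" unfolding badf_def using b1 col(2) by auto
    then show ?thesis using col(1) by blast
  next
    case b2
    have "coedge F r w \<longrightarrow> (0::nat) \<noteq> 1" by simp
    then obtain col where col: "rainbow F col" "col r = 0" "col w = 1"
      using PairP_use[OF P b2(4), of 0 1] by auto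
    have "\<not> badf E \<theta> col x q" unfolding badf_def using b2 col(2,3) by auto
    then show ?thesis using col(1) by blast
  next
    case b3
    have "\<exists>col. rainbow F col \<and> \<not> (col r1 \<noteq> col r2 \<and> col r1 \<noteq> col r3 \<and> col r2 \<noteq> col r3)"
    proof (cases "r1 = r2 \<or> r1 = r3 \<or> r2 = r3")
      case True then show ?thesis using col0 by blast
    next
      case False
      then have d: "r1 \<noteq> r2" "r1 \<noteq> r3" "r2 \<noteq> r3" by auto
      have "\<not> coedge F r1 r2 \<or> \<not> coedge F r2 r3 \<or> \<not> coedge F r3 r1"
      proof (rule ccontr)
        assume "\<not> ?thesis"
        then obtain f1 f2 f3 where "f1 \<in> F" "r1 \<in> f1" "r2 \<in> f1" "f2 \<in> F" "r2 \<in> f2" "r3 \<in> f2"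
          "f3 \<in> F" "r3 \<in> f3" "r1 \<in> f3" unfolding coedge_def by blast
        then have "{r1, r2, r3} \<in> E" using triangle[OF L FE nc d] by blast
        then show False using b3(6) by simp
      qed
      then consider "\<not> coedge F r1 r2" | "\<not> coedge F r2 r3" | "\<not> coedge F r3 r1" by blast
      then show ?thesis
      proof cases
        case 1
        then obtain col where "rainbow F col" "col r1 = 0" "col r2 = 0" using PairP_use[OF P d(1), of 0 0] by auto
        then show ?thesis by auto
      next
        case 2
        then obtain col where "rainbow F col" "col r2 = 0" "col r3 = 0" using PairP_use[OF P d(3), of 0 0] by auto
        then show ?thesis by auto
      next
        case 3
        then obtain col where "rainbow F col" "col r3 = 0" "col r1 = 0" using PairP_use[OF P d(2)[symmetric], of 0 0] by auto
        then show ?thesis by auto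
      qed
    qed
    then obtain col where col: "rainbow F col" "\<not> (col r1 \<noteq> col r2 \<and> col r1 \<noteq> col r3 \<and> col r2 \<noteq> col r3)" by blast
    have "\<not> badf E \<theta> col x q" unfolding badf_def using b3 col(2) by auto
    then show ?thesis using col(1) by blast
  next
    case none then show ?thesis using col0 by blast
  qed
qed


definition tvars :: "aiterm \<Rightarrow> nat set" where
  "tvars t = \<Union> (set ` t)"

lemma finite_tvars: "is_term t \<Longrightarrow> finite (tvars t)"
  unfolding tvars_def is_term_def by auto

definition hv :: "hs \<Rightarrow> nat" where
  "hv h = (case h of HAv r \<Rightarrow> r | HCv r \<Rightarrow> r | _ \<Rightarrow> 0)"

lemma key_dir:
  assumes L: "lin E" and G: "girth_greater E N" and u: "is_term u" and v: "is_term v"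
    and Sc: "fholds None Sc_mul Sc_carrier u v"
    and bound: "card (tvars u) + 1 \<le> N"
    and xv: "tval Inf (hmul E) \<theta> u = x" and xn: "x \<noteq> Inf"
  shows "tval Inf (hmul E) \<theta> v = x"
proof (rule ccontr)
  assume nv: "tval Inf (hmul E) \<theta> v \<noteq> x"
  interpret H: flatm Inf "hmul E" UNIV by (rule H_flat[OF L])
  interpret S: flatm None Sc_mul Sc_carrier by (rule Sc_flat)
  have une: "u \<noteq> {}" and unw: "\<forall>p\<in>u. p \<noteq> []" using u unfolding is_term_def by auto
  have vne: "v \<noteq> {}" and vnw: "\<forall>p\<in>v. p \<noteq> []" using v unfolding is_term_def by auto
  have imgu: "wval (hmul E) \<theta> ` u = {x}" using H.tval_cases[OF une] xv xn by simp
  then have uw: "\<And>p. p \<in> u \<Longrightarrow> wval (hmul E) \<theta> p = x" by blast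
  obtain q where q: "q \<in> v" "wval (hmul E) \<theta> q \<noteq> x"
  proof -
    have "\<not> (\<forall>p\<in>v. wval (hmul E) \<theta> p = x)"
    proof
      assume "\<forall>p\<in>v. wval (hmul E) \<theta> p = x"
      then have "wval (hmul E) \<theta> ` v = {x}" using vne by auto
      then show False using nv H.tval_single by blast
    qed
    then show ?thesis using that by blast
  qed
  have qne: "q \<noteq> []" using vnw q(1) by blast
  define Z where "Z = tvars u"
  define R where "R = {r. \<exists>z\<in>Z. \<theta> z = HAv r \<or> \<theta> z = HCv r} \<union> {w. x = HCv w}"
  define F where "F = {f\<in>E. f \<subseteq> R}"
  have finZ: "finite Z" unfolding Z_def by (rule finite_tvars[OF u])
  have Rsub: "R \<subseteq> (\<lambda>z. hv (\<theta> z)) ` Z \<union> {hv x}" unfolding R_def hv_def by force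
  have finR: "finite R" using finZ Rsub finite_subset by blast
  have cardR: "card R \<le> card Z + 1"
  proof -
    have "card R \<le> card ((\<lambda>z. hv (\<theta> z)) ` Z \<union> {hv x})" using Rsub finZ by (intro card_mono) auto
    also have "\<dots> \<le> card ((\<lambda>z. hv (\<theta> z)) ` Z) + card {hv x}" by (rule card_Un_le)
    also have "\<dots> \<le> card Z + 1" using card_image_le[OF finZ, of "\<lambda>z. hv (\<theta> z)"] by simp
    finally show ?thesis .
  qed
  have FE: "F \<subseteq> E" unfolding F_def by blast
  have finF: "finite F"
  proof -
    have "F \<subseteq> Pow R" unfolding F_def by blast
    then show ?thesis using finR finite_subset by blast
  qed
  have c3: "\<forall>f\<in>F. card f = 3" using L FE unfolding lin_def by blast
  have ncF: "noCyc F" unfolding noCyc_def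
  proof (intro allI notI)
    fix k assume cyc: "has_cycle_of_length F k"
    then obtain vs es where c: "length vs = k" "length es = k" "distinct vs" "set es \<subseteq> F"
      "\<forall>i<k. vs ! i \<in> es ! i \<and> vs ! (Suc i mod k) \<in> es ! i"
      unfolding has_cycle_of_length_def by blast
    have "set vs \<subseteq> R"
    proof
      fix a assume "a \<in> set vs"
      then obtain i where i: "i < k" "vs ! i = a" using c(1) by (metis in_set_conv_nth)
      have "es ! i \<in> F" using c(2,4) i(1) by (metis nth_mem subsetD)
      then show "a \<in> R" using c(5) i unfolding F_def by blast
    qed
    then have "k \<le> card R" using c(1,3) finR by (metis card_mono distinct_card)
    then have "k \<le> N" using cardR bound unfolding Z_def by simp
    moreover have "has_cycle_of_length E k" using cycle_mono[OF cyc FE] .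
    ultimately show False using G unfolding girth_greater_def by fastforce
  qed
  have P: "PairP F" using pair_lemma[OF finF ncF c3] .
  have wordZ: "\<And>z. z \<in> Z \<Longrightarrow> \<exists>p\<in>u. z \<in> set p" unfolding Z_def tvars_def by blast
  have RZ: "\<And>z r. z \<in> Z \<Longrightarrow> \<theta> z = HAv r \<or> \<theta> z = HCv r \<Longrightarrow> r \<in> R" unfolding R_def by blast
  have ZA: "\<And>p0 z. x = HAv p0 \<Longrightarrow> z \<in> Z \<Longrightarrow> \<theta> z = HAv p0"
  proof -
    fix p0 z assume a: "x = HAv p0" "z \<in> Z"
    obtain p where p: "p \<in> u" "z \<in> set p" using wordZ[OF a(2)] by blast
    obtain z' where "p = [z']" "\<theta> z' = HAv p0" using W1[of p E \<theta> p0] unw p(1) uw[OF p(1)] a(1) by blast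
    then show "\<theta> z = HAv p0" using p(2) by simp
  qed
  have ZC: "\<And>w0 z. x = HCv w0 \<Longrightarrow> z \<in> Z \<Longrightarrow> \<theta> z = HCv w0 \<or> (\<exists>s. \<theta> z = HAv s \<and> (\<exists>f\<in>F. s \<in> f \<and> w0 \<in> f \<and> s \<noteq> w0))"
  proof -
    fix w0 z assume a: "x = HCv w0" "z \<in> Z"
    obtain p where p: "p \<in> u" "z \<in> set p" using wordZ[OF a(2)] by blast
    have pv: "wval (hmul E) \<theta> p = HCv w0" using uw[OF p(1)] a(1) by simp
    have pz: "set p \<subseteq> Z" using p(1) unfolding Z_def tvars_def by blast
    from W2[OF L _ pv] unw p(1)
    consider (s1) z' where "p = [z']" "\<theta> z' = HCv w0"
      | (s2) z1 z2 s t where "p = [z1, z2]" "\<theta> z1 = HAv s" "\<theta> z2 = HAv t" "{s, t, w0} \<in> E" by blast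
    then show "\<theta> z = HCv w0 \<or> (\<exists>s. \<theta> z = HAv s \<and> (\<exists>f\<in>F. s \<in> f \<and> w0 \<in> f \<and> s \<noteq> w0))"
    proof cases
      case s1 then show ?thesis using p(2) by simp
    next
      case s2
      have sR: "s \<in> R" using RZ[of z1 s] pz s2(1,2) by simp
      have tR: "t \<in> R" using RZ[of z2 t] pz s2(1,3) by simp
      have wR: "w0 \<in> R" using a(1) unfolding R_def by blast
      have fF: "{s, t, w0} \<in> F" using s2(4) sR tR wR unfolding F_def by simp
      have d: "s \<noteq> t" "s \<noteq> w0" "t \<noteq> w0" using edge_distinct[OF L s2(4)] by auto
      have "z = z1 \<or> z = z2" using p(2) s2(1) by simp
      then show ?thesis
      proof
        assume "z = z1"
        then have h: "\<theta> z = HAv s" using s2(2) by simp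
        have "\<exists>f\<in>F. s \<in> f \<and> w0 \<in> f \<and> s \<noteq> w0" using fF d(2) by (intro bexI[of _ "{s, t, w0}"]) simp_all
        then show ?thesis using h by blast
      next
        assume "z = z2"
        then have h: "\<theta> z = HAv t" using s2(3) by simp
        have "\<exists>f\<in>F. t \<in> f \<and> w0 \<in> f \<and> t \<noteq> w0" using fF d(3) by (intro bexI[of _ "{s, t, w0}"]) simp_all
        then show ?thesis using h by blast
      qed
    qed
  qed
  have part: "\<And>z1 z2 s w0. q = [z1, z2] \<Longrightarrow> x = HCv w0 \<Longrightarrow> (\<theta> z1 = HAv s \<or> \<theta> z2 = HAv s) \<Longrightarrow>
        set q \<subseteq> Z \<Longrightarrow> \<exists>f\<in>F. s \<in> f \<and> w0 \<in> f \<and> s \<noteq> w0"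
  proof -
    fix z1 z2 s w0 assume a: "q = [z1, z2]" "x = HCv w0" "\<theta> z1 = HAv s \<or> \<theta> z2 = HAv s" "set q \<subseteq> Z"
    have z: "z1 \<in> Z" "z2 \<in> Z" using a(1,4) by auto
    from a(3) show "\<exists>f\<in>F. s \<in> f \<and> w0 \<in> f \<and> s \<noteq> w0"
    proof
      assume h: "\<theta> z1 = HAv s"
      then show ?thesis using ZC[OF a(2) z(1)] by auto
    next
      assume h: "\<theta> z2 = HAv s"
      then show ?thesis using ZC[OF a(2) z(2)] by auto
    qed
  qed
  show False
  proof (cases "set q \<subseteq> Z")
    case qZ: True
    obtain col where col: "rainbow F col" "\<not> badf E \<theta> col x q"
      using choose_col[OF L FE ncF P, of q x \<theta>] part qZ by blast
    interpret K: keyset E \<theta> Z R col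
      by unfold_locales (use L RZ col(1) in \<open>simp_all add: F_def\<close>)
    have homu: "\<And>p. p \<in> u \<Longrightarrow> wval Sc_mul K.\<phi> p = enc col x"
    proof -
      fix p assume p: "p \<in> u"
      have pz: "set p \<subseteq> Z" using p unfolding Z_def tvars_def by blast
      have "\<forall>w. wval (hmul E) \<theta> p = HCv w \<longrightarrow> w \<in> R" using uw[OF p] unfolding R_def by simp
      then show "wval Sc_mul K.\<phi> p = enc col x" using K.hom[OF _ pz] unw p uw[OF p] xn by simp
    qed
    have "wval Sc_mul K.\<phi> ` u = {enc col x}" using homu une by auto
    then have tu: "tval None Sc_mul K.\<phi> u = enc col x" by (rule S.tval_single)
    have tv: "tval None Sc_mul K.\<phi> v = enc col x" using Sc tu K.\<phi>_carrier unfolding fholds_def by metis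
    have encn: "enc col x \<noteq> None" using xn by (cases x) simp_all
    have "wval Sc_mul K.\<phi> ` v = {enc col x}" using S.tval_cases[OF vne] tv encn by simp
    then have wq: "wval Sc_mul K.\<phi> q = enc col x" using q(1) by blast
    have "K.BAD x q" using K.reflect[OF qne qZ xn q(2) wq ZA] ZC by blast
    then show False using col(2) unfolding K.BAD_def badf_def by blast
  next
    case False
    then obtain z where z: "z \<in> set q" "z \<notin> Z" by blast
    obtain col0 where col0: "rainbow F col0" using PairP_R[OF P, of 0 0] by auto
    interpret K: keyset E \<theta> Z R col0
      by unfold_locales (use L RZ col0 in \<open>simp_all add: F_def\<close>)
    have homu: "\<And>p. p \<in> u \<Longrightarrow> wval Sc_mul K.\<phi> p = enc col0 x"
    proof -
      fix p assume p: "p \<in> u"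
      have pz: "set p \<subseteq> Z" using p unfolding Z_def tvars_def by blast
      have "\<forall>w. wval (hmul E) \<theta> p = HCv w \<longrightarrow> w \<in> R" using uw[OF p] unfolding R_def by simp
      then show "wval Sc_mul K.\<phi> p = enc col0 x" using K.hom[OF _ pz] unw p uw[OF p] xn by simp
    qed
    have "wval Sc_mul K.\<phi> ` u = {enc col0 x}" using homu une by auto
    then have tu: "tval None Sc_mul K.\<phi> u = enc col0 x" by (rule S.tval_single)
    have tv: "tval None Sc_mul K.\<phi> v = enc col0 x" using Sc tu K.\<phi>_carrier unfolding fholds_def by metis
    have encn: "enc col0 x \<noteq> None" using xn by (cases x) simp_all
    have "wval Sc_mul K.\<phi> ` v = {enc col0 x}" using S.tval_cases[OF vne] tv encn by simp
    then have wq: "wval Sc_mul K.\<phi> q = enc col0 x" using q(1) by blast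
    have "K.\<phi> z = None" unfolding K.\<phi>_def using z(2) by simp
    then have "wval Sc_mul K.\<phi> q = None" using Sc_None_prop z(1) by blast
    then show False using wq encn by simp
  qed
qed


lemma key:
  assumes L: "lin E" and G: "girth_greater E N" and u: "is_term u" and v: "is_term v"
    and Sc: "fholds None Sc_mul Sc_carrier u v"
    and bound: "card (tvars u \<union> tvars v) + 1 \<le> N"
  shows "fholds Inf (hmul E) UNIV u v"
  unfolding fholds_def
proof (intro allI impI)
  fix \<theta> :: "nat \<Rightarrow> hs"
  have fu: "finite (tvars u)" "finite (tvars v)" using finite_tvars u v by blast+
  have bu: "card (tvars u) + 1 \<le> N" using bound card_mono[of "tvars u \<union> tvars v" "tvars u"] fu by simp
  have bv: "card (tvars v) + 1 \<le> N" using bound card_mono[of "tvars u \<union> tvars v" "tvars v"] fu by simp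
  have Sc': "fholds None Sc_mul Sc_carrier v u" using Sc unfolding fholds_def by metis
  show "tval Inf (hmul E) \<theta> u = tval Inf (hmul E) \<theta> v"
  proof (cases "tval Inf (hmul E) \<theta> u = Inf")
    case True
    show ?thesis
    proof (cases "tval Inf (hmul E) \<theta> v = Inf")
      case True then show ?thesis using \<open>tval Inf (hmul E) \<theta> u = Inf\<close> by simp
    next
      case False
      have "tval Inf (hmul E) \<theta> u = tval Inf (hmul E) \<theta> v"
        using key_dir[OF L G v u Sc' bv HOL.refl False] by simp
      then show ?thesis .
    qed
  next
    case False
    show ?thesis using key_dir[OF L G u v Sc bu HOL.refl False] by simp
  qed
qed

lemma choose2_ge: "m \<ge> 3 \<Longrightarrow> m \<le> m choose 2"
proof -
  assume m: "m \<ge> 3"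
  have "2 \<le> m - 1" using m by simp
  then have "m * 2 \<le> m * (m - 1)" by (rule mult_le_mono2)
  then have "2 * m \<le> m * (m - 1)" by simp
  then have "m \<le> m * (m - 1) div 2" by linarith
  then show ?thesis by (simp add: choose_two)
qed

lemma lin_from:
  assumes tu: "three_uniform V E" and G: "girth_greater E N" and N: "N \<ge> 2"
  shows "lin E"
  unfolding lin_def
proof (intro conjI ballI allI impI)
  fix e assume "e \<in> E" then show "card e = 3" using tu unfolding three_uniform_def by blast
next
  fix e1 e2 a b assume e: "e1 \<in> E" "e2 \<in> E" and ab: "a \<noteq> b" "a \<in> e1" "b \<in> e1" "a \<in> e2" "b \<in> e2"
  show "e1 = e2"
  proof (rule ccontr)
    assume ne: "e1 \<noteq> e2"
    have cyc: "\<forall>i<2. [a, b] ! i \<in> [e1, e2] ! i \<and> [a, b] ! (Suc i mod 2) \<in> [e1, e2] ! i"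
    proof (intro allI impI)
      fix i :: nat assume "i < 2"
      then have "i = 0 \<or> i = 1" by arith
      then show "[a, b] ! i \<in> [e1, e2] ! i \<and> [a, b] ! (Suc i mod 2) \<in> [e1, e2] ! i" using ab by auto
    qed
    have "distinct [a, b]" "distinct [e1, e2]" "set [e1, e2] \<subseteq> E" using ab ne e by auto
    then have "has_cycle_of_length E 2" unfolding has_cycle_of_length_def using cyc
      by (intro exI[of _ "[a, b]"] exI[of _ "[e1, e2]"]) simp
    then show False using G N unfolding girth_greater_def by fastforce
  qed
qed

theorem theorem2p1:
  fixes V :: "nat \<Rightarrow> nat set" and E :: "nat \<Rightarrow> nat set set"
    and \<Sigma> :: "(aiterm \<times> aiterm) set" and w :: "nat \<Rightarrow> aiterm"
  assumes hyp: "\<And>n. n \<ge> 2 \<Longrightarrow> three_uniform (V n) (E n) \<and> no_isolated (V n) (E n) \<and>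
      \<not> two_colourable (V n) (E n) \<and> girth_greater (E n) (3 * ((3 * n) choose 2))"
    and basis: "identity_set \<Sigma>"
    and contains_Sc: "\<forall>(u, v)\<in>\<Sigma>. Sc_satisfies u v"
    and w_nonhyp: "\<And>n. n \<ge> 2 \<Longrightarrow> non_hyperedge_term (V n) (E n) (w n)"
    and sat: "\<And>n. n \<ge> 2 \<Longrightarrow> derivable \<Sigma> (t_H (E n)) (tsum (t_H (E n)) (w n))"
  shows "\<not> finitely_based \<Sigma>"
proof
  assume "finitely_based \<Sigma>"
  then obtain \<Sigma>' where fin: "finite \<Sigma>'" and idS: "identity_set \<Sigma>'"
    and d1: "\<forall>(u, v)\<in>\<Sigma>'. derivable \<Sigma> u v" and d2: "\<forall>(u, v)\<in>\<Sigma>. derivable \<Sigma>' u v"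
    unfolding finitely_based_def by blast
  interpret S: flatm None Sc_mul Sc_carrier by (rule Sc_flat)
  define M where "M = Max (insert 0 ((\<lambda>(u, v). card (tvars u \<union> tvars v)) ` \<Sigma>'))"
  have Mge: "\<And>u v. (u, v) \<in> \<Sigma>' \<Longrightarrow> card (tvars u \<union> tvars v) \<le> M"
  proof -
    fix u v assume "(u, v) \<in> \<Sigma>'"
    then have "card (tvars u \<union> tvars v) \<in> insert 0 ((\<lambda>(u, v). card (tvars u \<union> tvars v)) ` \<Sigma>')" by force
    then show "card (tvars u \<union> tvars v) \<le> M" unfolding M_def using fin by simp
  qed
  define n where "n = M + 3"
  have n2: "n \<ge> 2" unfolding n_def by simp
  define N where "N = 3 * ((3 * n) choose 2)"
  have hn: "three_uniform (V n) (E n)" "\<not> two_colourable (V n) (E n)" "girth_greater (E n) N"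
    using hyp[OF n2] unfolding N_def by auto
  have "3 * n \<le> (3 * n) choose 2" using choose2_ge[of "3 * n"] n2 by simp
  then have Nn: "n \<le> N" unfolding N_def by simp
  have L: "lin (E n)" using lin_from[OF hn(1) hn(3)] Nn n2 by simp
  have ScS': "\<forall>(u, v)\<in>\<Sigma>'. fholds None Sc_mul Sc_carrier u v"
  proof -
    have h: "\<forall>(u, v)\<in>\<Sigma>. fholds None Sc_mul Sc_carrier u v"
      using contains_Sc unfolding Sc_satisfies_def fholds_def by blast
    show ?thesis using S.sound[OF basis h] d1 by blast
  qed
  interpret H: flatm Inf "hmul (E n)" UNIV by (rule H_flat[OF L])
  have HS': "\<forall>(u, v)\<in>\<Sigma>'. fholds Inf (hmul (E n)) UNIV u v"
  proof (intro ballI, clarify)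
    fix u v assume uv: "(u, v) \<in> \<Sigma>'"
    have t: "is_term u" "is_term v" using idS uv unfolding identity_set_def by auto
    have sc: "fholds None Sc_mul Sc_carrier u v" using ScS' uv by blast
    have "card (tvars u \<union> tvars v) + 1 \<le> N" using Mge[OF uv] Nn unfolding n_def by simp
    then show "fholds Inf (hmul (E n)) UNIV u v" using key[OF L hn(3) t sc] by simp
  qed
  have HS: "\<forall>(u, v)\<in>\<Sigma>. fholds Inf (hmul (E n)) UNIV u v"
    using H.sound[OF idS HS'] d2 by blast
  have Ht: "fholds Inf (hmul (E n)) UNIV (t_H (E n)) (tsum (t_H (E n)) (w n))"
    using H.sound[OF basis HS sat[OF n2]] by blast
  have wn: "non_hyperedge_term (V n) (E n) (w n)" using w_nonhyp[OF n2] .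
  have wt: "is_term (w n)" "hval (E n) (w n) \<noteq> HA" using wn unfolding non_hyperedge_term_def by auto
  have En: "E n \<noteq> {}"
  proof
    assume "E n = {}"
    then have "two_colourable (V n) (E n)" unfolding two_colourable_def by simp
    then show False using hn(2) by simp
  qed
  then obtain e where e: "e \<in> E n" by blast
  then have "card e = 3" using L unfolding lin_def by blast
  then obtain a b c where abc: "e = {a, b, c}" by (auto simp: card_3_iff)
  have tne: "t_H (E n) \<noteq> {}" using e abc unfolding t_H_def by blast
  have img: "wval (hmul (E n)) HAv ` t_H (E n) = {HA}"
  proof -
    have "\<And>p. p \<in> t_H (E n) \<Longrightarrow> wval (hmul (E n)) HAv p = HA"
    proof -
      fix p assume "p \<in> t_H (E n)"
      then obtain a b c where p: "p = [a, b, c]" "{a, b, c} \<in> E n" unfolding t_H_def by blast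
      have "wval (hmul (E n)) HAv p = hmul (E n) (HAv a) (hmul (E n) (HAv b) (HAv c))" using p by simp
      also have "\<dots> = HA" using hmul_AAA'[OF L] p(2) by simp
      finally show "wval (hmul (E n)) HAv p = HA" .
    qed
    then show ?thesis using tne by auto
  qed
  have tH: "tval Inf (hmul (E n)) HAv (t_H (E n)) = HA" using H.tval_single[OF img] .
  have wne: "w n \<noteq> {}" using wt(1) unfolding is_term_def by blast
  have "tval Inf (hmul (E n)) HAv (tsum (t_H (E n)) (w n)) = Inf"
    unfolding tsum_def using H.tval_union[OF tne wne] tH wt(2) unfolding hval_def by simp
  moreover have "tval Inf (hmul (E n)) HAv (t_H (E n)) = tval Inf (hmul (E n)) HAv (tsum (t_H (E n)) (w n))"
    using Ht unfolding fholds_def by blast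
  ultimately show False using tH by simp
qed


end
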